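(* Assume $\|\mathbf X\|_{\mathrm{TV}}<C_{\mathbf X}$ and $\|\mathbf z\|<C_{\mathbf z}$ almost surely, let $r>0$, and let $C=2(C_{\mathbf z}+e^{C_{\mathbf X}+T})$. For any $\varepsilon>0$ and $p\in\mathbb N$, let $n_2$ be the smallest integer such that $$n_2\ge\frac{432^2C^2\pi r^2(s_d(p)+q)}{\varepsilon^2}.$$ Then for any $n\ge n_2$, $$\mathbb P\big(|\widehat L_n(p)-L(p)|>\varepsilon\big)\le74\exp(-c_5n\varepsilon^2),\qquad c_5=\frac{1}{8r(288C^2r+C)}.$$
   Context: Let $T>0$, integers $d\ge2$, $q\ge1$. $(\mathbf X,\mathbf z,y)$ is a random triple with $\mathbf X:[0,T]\to\mathbb R^{d-1}$ a continuous bounded-variation path with fixed initial value, $\mathbf z\in\mathbb R^q$, $y\in\{0,1\}$; $\|\mathbf X\|_{\mathrm{TV}}=\sup\sum_i\|\mathbf X_{t_{i+1}}-\mathbf X_{t_i}\|$ over partitions of $[0,T]$. Time augmentation $\widetilde{\mathbf X}(t)=(\mathbf X(t),t)\in\mathbb R^d$; signature terms $S^I(\widetilde{\mathbf X})=\int_{0<t_1<\dots<t_k<T}d\widetilde X^{i_1}_{t_1}\cdots d\widetilde X^{i_k}_{t_k}$ ($I\in\{1,..,d\}^k$, empty $I$ gives 1); truncated signature $S_p(\widetilde{\mathbf X})=(S^I)_{|I|\le p}\in\mathbb R^{s_d(p)}$, $s_d(p)=\sum_{k=0}^pd^k$; $\widetilde{\mathbf S}_p(\widetilde{\mathbf X},\mathbf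 z)=(S_p(\widetilde{\mathbf X})^\top,\mathbf z^\top)^\top$. Logistic loss $\ell(y,\eta)=-y\eta+\log(1+e^\eta)$; $\mathcal R_p(\boldsymbol\theta_p)=\mathbb E[\ell(y,\widetilde{\mathbf S}_p^\top\boldsymbol\theta_p)]$; $B_{p,r}=\{\boldsymbol\theta\in\mathbb R^{s_d(p)+q}:\|\boldsymbol\theta\|_1\le r\}$; $L(p)=\min_{\boldsymbol\theta_p\in B_{p,r}}\mathcal R_p(\boldsymbol\theta_p)$. Data $(\mathbf X_i,\mathbf z_i,y_i)_{i=1}^n$ i.i.d. copies; $\widehat{\mathcal R}_{p,n}(\boldsymbol\theta_p)=\frac1n\sum_i\ell(y_i,\widetilde{\mathbf S}_p(\widetilde{\mathbf X}_i,\mathbf z_i)^\top\boldsymbol\theta_p)$; $\widehat L_n(p)=\min_{\boldsymbol\theta_p\in B_{p,r}}\widehat{\mathcal R}_{p,n}(\boldsymbol\theta_p)$. *)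

theory Defs
  imports "HOL-Probability.Probability"
begin

definition has_RS :: "(real \<Rightarrow> real) \<Rightarrow> (real \<Rightarrow> real) \<Rightarrow> real \<Rightarrow> real \<Rightarrow> real \<Rightarrow> bool" where
  "has_RS f g a b L \<longleftrightarrow>
     (\<forall>e>0. \<exists>\<delta>>0. \<forall>(n::nat) (t::nat \<Rightarrow> real) (s::nat \<Rightarrow> real).
        t 0 = a \<and> t n = b \<and>
        (\<forall>i<n. t i < t (Suc i) \<and> t (Suc i) - t i < \<delta> \<and> t i \<le> s i \<and> s i \<le> t (Suc i))
        \<longrightarrow> \<bar>(\<Sum>i<n. f (s i) * (g (t (Suc i)) - g (t i))) - L\<bar> < e)"

definition RS_int :: "(real \<Rightarrow> real) \<Rightarrow> (real \<Rightarrow> real) \<Rightarrow> real \<Rightarrow> real \<Rightarrow> real" where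
  "RS_int f g a b = (THE L. has_RS f g a b L)"

definition tv :: "real \<Rightarrow> real \<Rightarrow> (real \<Rightarrow> 'a::real_normed_vector) \<Rightarrow> ereal" where
  "tv a b f = (SUP nt \<in> {(n::nat, t::nat \<Rightarrow> real). t 0 = a \<and> t n = b \<and> (\<forall>i<n. t i \<le> t (Suc i))}.
                 ereal (\<Sum>i<fst nt. norm (f (snd nt (Suc i)) - f (snd nt i))))"

text \<open>Time augmentation: coordinate Some j is the j-th coordinate of the path, None is time.\<close>
definition aug :: "(real \<Rightarrow> real^'m) \<Rightarrow> 'm option \<Rightarrow> real \<Rightarrow> real" where
  "aug x j t = (case j of None \<Rightarrow> t | Some i \<Rightarrow> x t $ i)"

text \<open>itint x (i_k # ... # i_1) t = int_{0<t_1<...<t_k<t} dx^{i_1} ... dx^{i_k}\<close>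
fun itint :: "('i \<Rightarrow> real \<Rightarrow> real) \<Rightarrow> 'i list \<Rightarrow> real \<Rightarrow> real" where
  "itint x [] t = 1"
| "itint x (i # J) t = RS_int (itint x J) (x i) 0 t"

definition sig :: "real \<Rightarrow> (real \<Rightarrow> real^'m) \<Rightarrow> 'm option list \<Rightarrow> real" where
  "sig T x I = itint (aug x) (rev I) T"

definition sd :: "nat \<Rightarrow> nat \<Rightarrow> nat" where
  "sd d p = (\<Sum>k\<le>p. d ^ k)"

definition idx :: "nat \<Rightarrow> ('m::finite option list + 'q::finite) set" where
  "idx p = Inl ` {I. length I \<le> p} \<union> Inr ` UNIV"

definition l1ball :: "nat \<Rightarrow> real \<Rightarrow> ('m::finite option list + 'q::finite \<Rightarrow> real) set" where
  "l1ball p r = {\<theta>. (\<Sum>j\<in>idx p. \<bar>\<theta> j\<bar>) \<le> r}"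

definition feat :: "real \<Rightarrow> nat \<Rightarrow> (real \<Rightarrow> real^'m::finite) \<Rightarrow> real^'q::finite
                     \<Rightarrow> ('m option list + 'q \<Rightarrow> real) \<Rightarrow> real" where
  "feat T p x z \<theta> = (\<Sum>j\<in>idx p. \<theta> j * (case j of Inl I \<Rightarrow> sig T x I | Inr k \<Rightarrow> z $ k))"

definition loss :: "bool \<Rightarrow> real \<Rightarrow> real" where
  "loss y \<eta> = - of_bool y * \<eta> + ln (1 + exp \<eta>)"

definition risk :: "'w measure \<Rightarrow> real \<Rightarrow> nat \<Rightarrow> ('w \<Rightarrow> real \<Rightarrow> real^'m::finite) \<Rightarrow> ('w \<Rightarrow> real^'q::finite)
                     \<Rightarrow> ('w \<Rightarrow> bool) \<Rightarrow> ('m option list + 'q \<Rightarrow> real) \<Rightarrow> real" where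
  "risk M T p X Z Y \<theta> = (\<integral>\<omega>. loss (Y \<omega>) (feat T p (X \<omega>) (Z \<omega>) \<theta>) \<partial>M)"

definition Lpop :: "'w measure \<Rightarrow> real \<Rightarrow> real \<Rightarrow> nat \<Rightarrow> ('w \<Rightarrow> real \<Rightarrow> real^'m::finite)
                     \<Rightarrow> ('w \<Rightarrow> real^'q::finite) \<Rightarrow> ('w \<Rightarrow> bool) \<Rightarrow> real" where
  "Lpop M T r p X Z Y = Inf (risk M T p X Z Y ` l1ball p r)"

definition emp_risk :: "nat \<Rightarrow> real \<Rightarrow> nat \<Rightarrow> (nat \<Rightarrow> 'w \<Rightarrow> real \<Rightarrow> real^'m::finite) \<Rightarrow> (nat \<Rightarrow> 'w \<Rightarrow> real^'q::finite)
                     \<Rightarrow> (nat \<Rightarrow> 'w \<Rightarrow> bool) \<Rightarrow> 'w \<Rightarrow> ('m option list + 'q \<Rightarrow> real) \<Rightarrow> real" where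
  "emp_risk n T p Xs Zs Ys \<omega> \<theta> = (\<Sum>i<n. loss (Ys i \<omega>) (feat T p (Xs i \<omega>) (Zs i \<omega>) \<theta>)) / real n"

definition Lhat :: "nat \<Rightarrow> real \<Rightarrow> real \<Rightarrow> nat \<Rightarrow> (nat \<Rightarrow> 'w \<Rightarrow> real \<Rightarrow> real^'m::finite)
                     \<Rightarrow> (nat \<Rightarrow> 'w \<Rightarrow> real^'q::finite) \<Rightarrow> (nat \<Rightarrow> 'w \<Rightarrow> bool) \<Rightarrow> 'w \<Rightarrow> real" where
  "Lhat n T r p Xs Zs Ys \<omega> = Inf (emp_risk n T p Xs Zs Ys \<omega> ` l1ball p r)"

text \<open>Measurable space of triples (path, z, y); paths carry the cylinder sigma-algebra.\<close>
definition triple_space :: "((real \<Rightarrow> real^'m::finite) \<times> (real^'q::finite) \<times> bool) measure" where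
  "triple_space = (Pi\<^sub>M UNIV (\<lambda>_. borel)) \<Otimes>\<^sub>M (borel \<Otimes>\<^sub>M count_space UNIV)"

end

theory Submission
  imports Defs
begin

definition grid :: "real \<Rightarrow> real \<Rightarrow> nat \<Rightarrow> nat \<Rightarrow> real" where
  "grid a b N k = a + (b - a) * real k / real N"

definition gsum :: "(real \<Rightarrow> real) \<Rightarrow> (real \<Rightarrow> real) \<Rightarrow> real \<Rightarrow> real \<Rightarrow> nat \<Rightarrow> real" where
  "gsum f g a b N = (\<Sum>k<N. f (grid a b N k) * (g (grid a b N (Suc k)) - g (grid a b N k)))"

definition rsum :: "(real \<Rightarrow> real) \<Rightarrow> (real \<Rightarrow> real) \<Rightarrow> nat \<Rightarrow> (nat \<Rightarrow> real) \<Rightarrow> (nat \<Rightarrow> real) \<Rightarrow> real" where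
  "rsum f g n t s = (\<Sum>i<n. f (s i) * (g (t (Suc i)) - g (t i)))"

definition tagged :: "real \<Rightarrow> real \<Rightarrow> real \<Rightarrow> nat \<Rightarrow> (nat \<Rightarrow> real) \<Rightarrow> (nat \<Rightarrow> real) \<Rightarrow> bool" where
  "tagged a b \<delta> n t s \<longleftrightarrow> t 0 = a \<and> t n = b \<and>
     (\<forall>i<n. t i < t (Suc i) \<and> t (Suc i) - t i < \<delta> \<and> t i \<le> s i \<and> s i \<le> t (Suc i))"

lemma has_RS_alt:
  "has_RS f g a b L \<longleftrightarrow> (\<forall>e>0. \<exists>\<delta>>0. \<forall>n t s. tagged a b \<delta> n t s \<longrightarrow> \<bar>rsum f g n t s - L\<bar> < e)"
  unfolding has_RS_def tagged_def rsum_def by blast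

lemma sum_split_mono:
  fixes m :: "nat \<Rightarrow> nat"
  assumes "m 0 = 0" "\<And>j. j < n \<Longrightarrow> m j \<le> m (Suc j)"
  shows "(\<Sum>k<m n. F k) = (\<Sum>j<n. \<Sum>k\<in>{m j..<m (Suc j)}. F k)"
  using assms(2)
proof (induction n)
  case 0 then show ?case using assms(1) by simp
next
  case (Suc n)
  have "m n \<le> m (Suc n)" using Suc.prems by simp
  then have "(\<Sum>k<m (Suc n). F k) = (\<Sum>k<m n. F k) + (\<Sum>k\<in>{m n..<m (Suc n)}. F k)"
    by (metis lessThan_atLeast0 sum.atLeastLessThan_concat zero_le)
  then show ?case using Suc by simp
qed

lemma grid_eq: "N > 0 \<Longrightarrow> grid a b N k = a + ((b - a) / N) * k"
  unfolding grid_def by (simp add: field_simps)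

lemma grid_0[simp]: "grid a b N 0 = a" unfolding grid_def by simp
lemma grid_N[simp]: "N > 0 \<Longrightarrow> grid a b N N = b" unfolding grid_def by simp

lemma grid_mono: "a \<le> b \<Longrightarrow> k \<le> l \<Longrightarrow> grid a b N k \<le> grid a b N l"
  unfolding grid_def by (intro add_left_mono divide_right_mono mult_left_mono) auto

lemma grid_in: "a \<le> b \<Longrightarrow> k \<le> N \<Longrightarrow> N > 0 \<Longrightarrow> grid a b N k \<in> {a..b}"
  using grid_mono[of a b 0 k N] grid_mono[of a b k N N] by auto

lemma RS_compare:
  fixes f g W :: "real \<Rightarrow> real"
  assumes ab: "a < b" and cg: "continuous_on {a..b} g"
    and Wg: "\<And>u v. a \<le> u \<Longrightarrow> u \<le> v \<Longrightarrow> v \<le> b \<Longrightarrow> \<bar>g v - g u\<bar> \<le> W v - W u"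
    and eta: "\<And>u v. u \<in> {a..b} \<Longrightarrow> v \<in> {a..b} \<Longrightarrow> \<bar>u - v\<bar> < \<delta> \<Longrightarrow> \<bar>f u - f v\<bar> \<le> \<eta>"
    and P: "tagged a b \<delta> n t s" and e: "e > 0"
  shows "\<exists>N0. \<forall>N\<ge>N0. \<bar>gsum f g a b N - rsum f g n t s\<bar> \<le> \<eta> * (W b - W a) + e"
proof -
  from P have t0: "t 0 = a" and tn: "t n = b"
    and tP: "\<And>i. i < n \<Longrightarrow> t i < t (Suc i) \<and> t (Suc i) - t i < \<delta> \<and> t i \<le> s i \<and> s i \<le> t (Suc i)"
    unfolding tagged_def by auto
  have tmono: "t i \<le> t j" if "i \<le> j" "j \<le> n" for i j
    using that
  proof (induction j)
    case 0 then show ?case by simp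
  next
    case (Suc j)
    show ?case
    proof (cases "i = Suc j")
      case False
      then have "t i \<le> t j" using Suc by simp
      also have "t j \<le> t (Suc j)" using tP[of j] Suc.prems by simp
      finally show ?thesis .
    qed simp
  qed
  have trange: "a \<le> t j \<and> t j \<le> b" if "j \<le> n" for j
    using tmono[of 0 j] tmono[of j n] that t0 tn by simp
  have n_pos: "n > 0"
  proof (rule ccontr)
    assume "\<not> n > 0" then have "n = 0" by simp
    then show False using t0 tn ab by simp
  qed
  define mx where "mx = Max ((\<lambda>i. t (Suc i) - t i) ` {..<n})"
  have mx: "mx < \<delta>" unfolding mx_def using n_pos tP by (subst Max_less_iff) auto
  have mxge: "t (Suc i) - t i \<le> mx" if "i < n" for i
    unfolding mx_def using that by (intro Max_ge) auto
  obtain N1 :: nat where N1: "(b - a) / (\<delta> - mx) < N1" using reals_Archimedean2 by blast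
  have N1pos: "N1 > 0" using N1 ab mx
    by (metis divide_pos_pos diff_gt_0_iff_gt gr0I of_nat_0 order_less_asym)
  have hN1: "(b - a) / N1 < \<delta> - mx" using N1 N1pos mx ab
    by (simp add: divide_less_eq mult.commute pos_divide_less_eq)
  define m where "m N j = nat \<lfloor>(t j - a) / ((b - a) / N)\<rfloor>" for N :: nat and j
  define \<tau> where "\<tau> N j = grid a b N (m N j)" for N j
  have \<tau>bnd: "t j - (b - a) / N < \<tau> N j \<and> \<tau> N j \<le> t j \<and> a \<le> \<tau> N j" if "j \<le> n" "N > 0" for N j
  proof -
    define h where "h = (b - a) / N"
    have h: "h > 0" unfolding h_def using ab that by simp
    define x where "x = (t j - a) / h"
    have x0: "x \<ge> 0" unfolding x_def using trange[OF that(1)] h by simp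
    have mm: "real (m N j) = \<lfloor>x\<rfloor>" unfolding m_def x_def h_def using x0[unfolded x_def h_def] by simp
    have "\<tau> N j = a + h * \<lfloor>x\<rfloor>" unfolding \<tau>_def grid_eq[OF that(2)] h_def[symmetric] mm by simp
    moreover have fl: "x - 1 < \<lfloor>x\<rfloor>" "\<lfloor>x\<rfloor> \<le> x" by linarith+
    moreover have ax: "a + h * x = t j" unfolding x_def using h by simp
    moreover have "0 \<le> \<lfloor>x\<rfloor>" using x0 by simp
    moreover have "h * (x - 1) < h * \<lfloor>x\<rfloor>" using fl h by (intro mult_strict_left_mono) auto
    moreover have "h * \<lfloor>x\<rfloor> \<le> h * x" using fl h by (intro mult_left_mono) auto
    moreover have "0 \<le> h * \<lfloor>x\<rfloor>" using h x0 by simp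
    ultimately show ?thesis unfolding h_def[symmetric] by (simp add: right_diff_distrib)
  qed
  have \<tau>lim: "(\<lambda>N. \<tau> N j) \<longlonglongrightarrow> t j" if "j \<le> n" for j
  proof (rule tendsto_sandwich[where f = "\<lambda>N::nat. t j - (b - a) / real N" and h = "\<lambda>N::nat. t j"])
    show "\<forall>\<^sub>F N in sequentially. t j - (b - a) / real N \<le> \<tau> N j"
      using \<tau>bnd[OF that] by (intro eventually_sequentiallyI[of 1]) (auto intro: less_imp_le)
    show "\<forall>\<^sub>F N in sequentially. \<tau> N j \<le> t j"
      using \<tau>bnd[OF that] by (intro eventually_sequentiallyI[of 1]) auto
    show "(\<lambda>N. t j - (b - a) / real N) \<longlonglongrightarrow> t j"
      using tendsto_diff[OF tendsto_const lim_const_over_n[of "b - a"]] by simp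
  qed simp
  have g\<tau>: "(\<lambda>N. g (\<tau> N j)) \<longlonglongrightarrow> g (t j)" if "j \<le> n" for j
  proof (rule continuous_on_tendsto_compose[OF cg \<tau>lim[OF that]])
    show "t j \<in> {a..b}" using trange[OF that] by simp
    show "\<forall>\<^sub>F N in sequentially. \<tau> N j \<in> {a..b}"
    proof (intro eventually_sequentiallyI[of 1])
      fix N :: nat assume "1 \<le> N"
      then show "\<tau> N j \<in> {a..b}" using \<tau>bnd[OF that, of N] trange[OF that] by auto
    qed
  qed
  define S' where "S' N = (\<Sum>i<n. f (s i) * (g (\<tau> N (Suc i)) - g (\<tau> N i)))" for N
  have "S' \<longlonglongrightarrow> rsum f g n t s"
    unfolding S'_def rsum_def
    by (intro tendsto_intros g\<tau>) auto
  then obtain N2 where N2: "\<And>N. N \<ge> N2 \<Longrightarrow> \<bar>S' N - rsum f g n t s\<bar> < e"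
    using e unfolding LIMSEQ_iff by (metis real_norm_def)
  have main: "\<bar>gsum f g a b N - S' N\<bar> \<le> \<eta> * (W b - W a)" if N: "N \<ge> N1" for N
  proof -
    have Npos: "N > 0" using N N1pos by simp
    define h where "h = (b - a) / N"
    have h: "h > 0" unfolding h_def using ab Npos by simp
    have hd: "h < \<delta> - mx" unfolding h_def using hN1 N N1pos ab
      by (smt (verit) frac_le of_nat_0_less_iff of_nat_mono)
    have gr: "grid a b N k = a + h * k" for k unfolding h_def using grid_eq[OF Npos] by simp
    have m0: "m N 0 = 0" unfolding m_def t0 by simp
    have mn: "m N n = N" unfolding m_def tn using ab Npos by simp
    have mmono: "m N j \<le> m N (Suc j)" if "j < n" for j
      unfolding m_def using tP[OF that] h h_def
      by (intro nat_mono floor_mono divide_right_mono) (auto simp: h_def)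
    have mle: "m N j \<le> N" if "j \<le> n" for j
    proof -
      have "(t j - a) / h \<le> (b - a) / h" using trange[OF that] h by (intro divide_right_mono) auto
      also have "\<dots> = N" unfolding h_def using ab Npos by simp
      finally show ?thesis unfolding m_def h_def[symmetric]
        by (metis floor_mono floor_of_nat nat_int nat_mono)
    qed
    have \<tau>eq: "\<tau> N j = grid a b N (m N j)" for j unfolding \<tau>_def by simp
    have \<tau>lo: "t j - h < grid a b N (m N j)" if "j \<le> n" for j
      using \<tau>bnd[OF that Npos] unfolding \<tau>eq h_def by simp
    have \<tau>hi: "grid a b N (m N j) \<le> t j" if "j \<le> n" for j
      using \<tau>bnd[OF that Npos] unfolding \<tau>eq by simp
    define F where "F k = f (grid a b N k) * (g (grid a b N (Suc k)) - g (grid a b N k))" for k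
    define dW where "dW k = W (grid a b N (Suc k)) - W (grid a b N k)" for k
    have gs: "gsum f g a b N = (\<Sum>j<n. \<Sum>k\<in>{m N j..<m N (Suc j)}. F k)"
      unfolding gsum_def F_def[symmetric] using sum_split_mono[of "m N" n F, OF m0 mmono] mn by simp
    have S'eq: "S' N = (\<Sum>j<n. \<Sum>k\<in>{m N j..<m N (Suc j)}. f (s j) * (g (grid a b N (Suc k)) - g (grid a b N k)))"
      unfolding S'_def \<tau>eq
    proof (intro sum.cong refl)
      fix j assume j: "j \<in> {..<n}"
      have "(\<Sum>k\<in>{m N j..<m N (Suc j)}. g (grid a b N (Suc k)) - g (grid a b N k))
            = g (grid a b N (m N (Suc j))) - g (grid a b N (m N j))"
        using sum_Suc_diff'[OF mmono, of j "\<lambda>k. g (grid a b N k)"] j by simp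
      then show "f (s j) * (g (grid a b N (m N (Suc j))) - g (grid a b N (m N j)))
          = (\<Sum>k\<in>{m N j..<m N (Suc j)}. f (s j) * (g (grid a b N (Suc k)) - g (grid a b N k)))"
        by (simp add: sum_distrib_left[symmetric])
    qed
    have bnd: "\<bar>F k - f (s j) * (g (grid a b N (Suc k)) - g (grid a b N k))\<bar> \<le> \<eta> * dW k"
      if j: "j < n" and k: "k \<in> {m N j..<m N (Suc j)}" for j k
    proof -
      have kN: "Suc k \<le> N" using k mle[of "Suc j"] j by simp
      have gk: "grid a b N k \<in> {a..b}" "grid a b N (Suc k) \<in> {a..b}"
        using grid_in[of a b k N] grid_in[of a b "Suc k" N] kN ab Npos by auto
      have "grid a b N (m N j) \<le> grid a b N k" using k ab by (intro grid_mono) auto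
      then have lo: "t j - h < grid a b N k" using \<tau>lo[of j] j by simp
      have "grid a b N (Suc k) \<le> grid a b N (m N (Suc j))" using k ab by (intro grid_mono) auto
      then have "grid a b N k + h \<le> t (Suc j)" using \<tau>hi[of "Suc j"] j gr[of k] gr[of "Suc k"]
        by (simp add: algebra_simps)
      then have hi: "grid a b N k < t (Suc j)" using h by simp
      have sj: "t j \<le> s j" "s j \<le> t (Suc j)" using tP[OF j] by auto
      have sab: "s j \<in> {a..b}" using sj trange[of j] trange[of "Suc j"] j by auto
      have m1: "grid a b N k - s j < \<delta>" using lo hi sj mxge[OF j] hd mx h by linarith
      have m2: "s j - grid a b N k < \<delta>" using lo hi sj mxge[OF j] hd mx h by linarith
      have "\<bar>grid a b N k - s j\<bar> < \<delta>" using m1 m2 by (simp add: abs_less_iff)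
      then have fe: "\<bar>f (grid a b N k) - f (s j)\<bar> \<le> \<eta>" using eta gk sab by blast
      have ge: "\<bar>g (grid a b N (Suc k)) - g (grid a b N k)\<bar> \<le> dW k"
        unfolding dW_def using gk by (intro Wg) (auto intro: grid_mono simp: ab less_imp_le)
      have "\<bar>F k - f (s j) * (g (grid a b N (Suc k)) - g (grid a b N k))\<bar>
          = \<bar>f (grid a b N k) - f (s j)\<bar> * \<bar>g (grid a b N (Suc k)) - g (grid a b N k)\<bar>"
        unfolding F_def by (simp add: abs_mult[symmetric] left_diff_distrib)
      also have "\<dots> \<le> \<eta> * dW k" using fe ge by (intro mult_mono) auto
      finally show ?thesis .
    qed
    have "\<bar>gsum f g a b N - S' N\<bar>
        = \<bar>\<Sum>j<n. \<Sum>k\<in>{m N j..<m N (Suc j)}. (F k - f (s j) * (g (grid a b N (Suc k)) - g (grid a b N k)))\<bar>"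
      unfolding gs S'eq by (simp add: sum_subtractf)
    also have "\<dots> \<le> (\<Sum>j<n. \<Sum>k\<in>{m N j..<m N (Suc j)}. \<eta> * dW k)"
      apply (rule order_trans[OF sum_abs])
      apply (rule sum_mono)
      apply (rule order_trans[OF sum_abs])
      apply (rule sum_mono)
      using bnd by auto
    also have "\<dots> = \<eta> * (\<Sum>k<m N n. dW k)"
      using sum_split_mono[of "m N" n dW, OF m0 mmono] by (simp add: sum_distrib_left)
    also have "(\<Sum>k<m N n. dW k) = W b - W a"
      unfolding mn dW_def using sum_Suc_diff'[of 0 N "\<lambda>k. W (grid a b N k)"] Npos
      by (simp add: atLeast0LessThan)
    finally show ?thesis .
  qed
  show ?thesis
  proof (intro exI allI impI)
    fix N assume "max N1 N2 \<le> N"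
    then have "\<bar>gsum f g a b N - S' N\<bar> \<le> \<eta> * (W b - W a)" "\<bar>S' N - rsum f g n t s\<bar> < e"
      using main N2 by auto
    then show "\<bar>gsum f g a b N - rsum f g n t s\<bar> \<le> \<eta> * (W b - W a) + e" by linarith
  qed
qed

lemma uc_eta:
  fixes f :: "real \<Rightarrow> real"
  assumes "continuous_on {a..b} f" "\<eta> > 0"
  shows "\<exists>\<delta>>0. \<forall>u\<in>{a..b}. \<forall>v\<in>{a..b}. \<bar>u - v\<bar> < \<delta> \<longrightarrow> \<bar>f u - f v\<bar> \<le> \<eta>"
proof -
  have "uniformly_continuous_on {a..b} f"
    using assms(1) by (intro compact_uniformly_continuous) auto
  then obtain d where "d > 0" "\<forall>x\<in>{a..b}. \<forall>x'\<in>{a..b}. dist x' x < d \<longrightarrow> dist (f x') (f x) < \<eta>"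
    using assms(2) unfolding uniformly_continuous_on_def by metis
  then show ?thesis
    by (intro exI[of _ d]) (auto simp: dist_real_def less_imp_le)
qed

lemma tagged_grid:
  assumes "a < b" "N > 0" "(b - a) / N < \<delta>"
  shows "tagged a b \<delta> N (grid a b N) (grid a b N)"
proof -
  have d: "grid a b N (Suc i) - grid a b N i = (b - a) / N" for i
    unfolding grid_def by (simp add: diff_divide_distrib[symmetric] algebra_simps)
  have d': "grid a b N (Suc i) = grid a b N i + (b - a) / N" for i using d[of i] by simp
  have pos: "(b - a) / real N > 0" using assms by simp
  show ?thesis unfolding tagged_def using assms pos
    by (auto simp: grid_N d')
qed

lemma rsum_grid: "rsum f g N (grid a b N) (grid a b N) = gsum f g a b N"
  unfolding rsum_def gsum_def by simp

lemma exists_grid: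
  assumes "a < b" "\<delta> > 0"
  obtains N where "N > 0" "(b - a) / real N < \<delta>"
proof -
  obtain N :: nat where N: "(b - a) / \<delta> < N" using reals_Archimedean2 by blast
  have "N > 0" using N assms
    by (metis divide_pos_pos diff_gt_0_iff_gt gr0I of_nat_0 order_less_asym)
  moreover have "(b - a) / N < \<delta>" using N assms \<open>N > 0\<close>
    by (simp add: divide_less_eq mult.commute pos_divide_less_eq)
  ultimately show ?thesis using that by blast
qed

lemma RS_exists:
  fixes f g W :: "real \<Rightarrow> real"
  assumes ab: "a < b" and cf: "continuous_on {a..b} f" and cg: "continuous_on {a..b} g"
    and Wg: "\<And>u v. a \<le> u \<Longrightarrow> u \<le> v \<Longrightarrow> v \<le> b \<Longrightarrow> \<bar>g v - g u\<bar> \<le> W v - W u"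
  shows "\<exists>L. gsum f g a b \<longlonglongrightarrow> L \<and>
    (\<forall>\<eta> \<delta> n t s. \<delta> > 0 \<longrightarrow> (\<forall>u\<in>{a..b}. \<forall>v\<in>{a..b}. \<bar>u - v\<bar> < \<delta> \<longrightarrow> \<bar>f u - f v\<bar> \<le> \<eta>)
        \<longrightarrow> tagged a b \<delta> n t s \<longrightarrow> \<bar>rsum f g n t s - L\<bar> \<le> \<eta> * (W b - W a))"
proof -
  define V where "V = W b - W a"
  have V: "V \<ge> 0" unfolding V_def using Wg[of a b] ab by simp
  have "Cauchy (gsum f g a b)"
  proof (rule metric_CauchyI)
    fix e :: real assume e: "e > 0"
    define \<eta> where "\<eta> = e / (4 * (V + 1))"
    have \<eta>: "\<eta> > 0" unfolding \<eta>_def using e V by simp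
    have \<eta>V: "\<eta> * V < e / 4" unfolding \<eta>_def using e V by (simp add: field_simps)
    obtain \<delta> where \<delta>: "\<delta> > 0" "\<forall>u\<in>{a..b}. \<forall>v\<in>{a..b}. \<bar>u - v\<bar> < \<delta> \<longrightarrow> \<bar>f u - f v\<bar> \<le> \<eta>"
      using uc_eta[OF cf \<eta>] by blast
    obtain M where M: "M > 0" "(b - a) / real M < \<delta>" using exists_grid[OF ab \<delta>(1)] by blast
    have "\<exists>N0. \<forall>N\<ge>N0. \<bar>gsum f g a b N - rsum f g M (grid a b M) (grid a b M)\<bar> \<le> \<eta> * (W b - W a) + e / 4"
      by (rule RS_compare[OF ab cg Wg _ tagged_grid[OF ab M]]) (use \<delta>(2) e in auto)
    then obtain N0 where N0: "\<And>N. N \<ge> N0 \<Longrightarrow> \<bar>gsum f g a b N - rsum f g M (grid a b M) (grid a b M)\<bar> \<le> \<eta> * V + e / 4"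
      unfolding V_def by blast
    show "\<exists>M. \<forall>m\<ge>M. \<forall>n\<ge>M. dist (gsum f g a b m) (gsum f g a b n) < e"
    proof (intro exI allI impI)
      fix m n assume "N0 \<le> m" "N0 \<le> n"
      then have "\<bar>gsum f g a b m - rsum f g M (grid a b M) (grid a b M)\<bar> \<le> \<eta> * V + e / 4"
        "\<bar>gsum f g a b n - rsum f g M (grid a b M) (grid a b M)\<bar> \<le> \<eta> * V + e / 4"
        using N0 by auto
      then show "dist (gsum f g a b m) (gsum f g a b n) < e"
        using \<eta>V unfolding dist_real_def by linarith
    qed
  qed
  then obtain L where L: "gsum f g a b \<longlonglongrightarrow> L"
    using Cauchy_convergent_iff convergent_def by blast
  have "\<bar>rsum f g n t s - L\<bar> \<le> \<eta> * V"
    if \<delta>: "\<delta> > 0" and eta: "\<forall>u\<in>{a..b}. \<forall>v\<in>{a..b}. \<bar>u - v\<bar> < \<delta> \<longrightarrow> \<bar>f u - f v\<bar> \<le> \<eta>"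
      and P: "tagged a b \<delta> n t s" for \<eta> \<delta> n t s
  proof (rule field_le_epsilon)
    fix e :: real assume e: "e > 0"
    have "\<exists>N0. \<forall>N\<ge>N0. \<bar>gsum f g a b N - rsum f g n t s\<bar> \<le> \<eta> * (W b - W a) + e"
      by (rule RS_compare[OF ab cg Wg _ P e]) (use eta in auto)
    then obtain N0 where N0: "\<And>N. N \<ge> N0 \<Longrightarrow> \<bar>gsum f g a b N - rsum f g n t s\<bar> \<le> \<eta> * V + e"
      unfolding V_def by blast
    have "(\<lambda>N. \<bar>gsum f g a b N - rsum f g n t s\<bar>) \<longlonglongrightarrow> \<bar>L - rsum f g n t s\<bar>"
      by (intro tendsto_intros L)
    moreover have "\<forall>\<^sub>F N in sequentially. \<bar>gsum f g a b N - rsum f g n t s\<bar> \<le> \<eta> * V + e"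
      using N0 by (intro eventually_sequentiallyI[of N0]) auto
    ultimately have "\<bar>L - rsum f g n t s\<bar> \<le> \<eta> * V + e"
      by (rule tendsto_upperbound) simp
    then show "\<bar>rsum f g n t s - L\<bar> \<le> \<eta> * V + e" by (simp add: abs_minus_commute)
  qed
  then show ?thesis using L unfolding V_def by blast
qed

lemma tagged_lt:
  assumes "tagged a b \<delta> n t s" "n > 0"
  shows "a < b"
proof -
  have tP: "\<And>i. i < n \<Longrightarrow> t i < t (Suc i)" using assms(1) unfolding tagged_def by auto
  have "t 0 < t j" if "0 < j" "j \<le> n" for j
    using that
  proof (induction j)
    case (Suc j)
    show ?case
    proof (cases "j = 0")
      case True then show ?thesis using tP[of 0] Suc by simp
    next
      case False
      then have "t 0 < t j" using Suc by simp
      also have "t j < t (Suc j)" using tP[of j] Suc by simp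
      finally show ?thesis .
    qed
  qed simp
  then show ?thesis using assms unfolding tagged_def by force
qed

lemma has_RS_same: "has_RS f g a a L \<longleftrightarrow> L = 0"
proof -
  have tg: "tagged a a \<delta> n t s \<longleftrightarrow> n = 0 \<and> t 0 = a" for \<delta> n t s
    using tagged_lt[of a a \<delta> n t s] unfolding tagged_def by auto
  have "has_RS f g a a L \<longleftrightarrow> (\<forall>e>0. \<bar>L\<bar> < e)"
    unfolding has_RS_alt tg by (auto simp: rsum_def)
  also have "\<dots> \<longleftrightarrow> L = 0"
  proof
    assume "\<forall>e>0. \<bar>L\<bar> < e"
    then show "L = 0" by (metis less_irrefl zero_less_abs_iff)
  qed simp
  finally show ?thesis .
qed

lemma RS_int_same: "RS_int f g a a = 0"
  unfolding RS_int_def by (rule the_equality) (simp_all add: has_RS_same)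

lemma has_RS_unique:
  assumes ab: "a < b" and L1: "has_RS f g a b L1" and L2: "has_RS f g a b L2"
  shows "L1 = L2"
proof (rule ccontr)
  assume ne: "L1 \<noteq> L2"
  define e where "e = \<bar>L1 - L2\<bar> / 2"
  have e: "e > 0" unfolding e_def using ne by simp
  obtain d1 where d1: "d1 > 0" "\<And>n t s. tagged a b d1 n t s \<Longrightarrow> \<bar>rsum f g n t s - L1\<bar> < e"
    using L1 e unfolding has_RS_alt by metis
  obtain d2 where d2: "d2 > 0" "\<And>n t s. tagged a b d2 n t s \<Longrightarrow> \<bar>rsum f g n t s - L2\<bar> < e"
    using L2 e unfolding has_RS_alt by metis
  obtain N where N: "N > 0" "(b - a) / real N < min d1 d2"
    using exists_grid[OF ab, of "min d1 d2"] d1 d2 by auto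
  have "tagged a b d1 N (grid a b N) (grid a b N)" "tagged a b d2 N (grid a b N) (grid a b N)"
    using tagged_grid[OF ab N(1)] N(2) by auto
  then have "\<bar>rsum f g N (grid a b N) (grid a b N) - L1\<bar> < e" "\<bar>rsum f g N (grid a b N) (grid a b N) - L2\<bar> < e"
    using d1 d2 by auto
  then show False using e_def by (auto simp: abs_if split: if_splits)
qed

lemma RS_main:
  fixes f g W :: "real \<Rightarrow> real"
  assumes ab: "a < b" and cf: "continuous_on {a..b} f" and cg: "continuous_on {a..b} g"
    and Wg: "\<And>u v. a \<le> u \<Longrightarrow> u \<le> v \<Longrightarrow> v \<le> b \<Longrightarrow> \<bar>g v - g u\<bar> \<le> W v - W u"
  shows "gsum f g a b \<longlonglongrightarrow> RS_int f g a b"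
    and "\<And>\<eta> \<delta> n t s. \<delta> > 0 \<Longrightarrow> (\<forall>u\<in>{a..b}. \<forall>v\<in>{a..b}. \<bar>u - v\<bar> < \<delta> \<longrightarrow> \<bar>f u - f v\<bar> \<le> \<eta>)
        \<Longrightarrow> tagged a b \<delta> n t s \<Longrightarrow> \<bar>rsum f g n t s - RS_int f g a b\<bar> \<le> \<eta> * (W b - W a)"
proof -
  obtain L where L: "gsum f g a b \<longlonglongrightarrow> L"
    and B: "\<And>\<eta> \<delta> n t s. \<delta> > 0 \<Longrightarrow> (\<forall>u\<in>{a..b}. \<forall>v\<in>{a..b}. \<bar>u - v\<bar> < \<delta> \<longrightarrow> \<bar>f u - f v\<bar> \<le> \<eta>)
        \<Longrightarrow> tagged a b \<delta> n t s \<Longrightarrow> \<bar>rsum f g n t s - L\<bar> \<le> \<eta> * (W b - W a)"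
    using RS_exists[OF ab cf cg Wg] by blast
  define V where "V = W b - W a"
  have V: "V \<ge> 0" unfolding V_def using Wg[of a b] ab by simp
  have "has_RS f g a b L"
    unfolding has_RS_alt
  proof (intro allI impI)
    fix e :: real assume e: "e > 0"
    define \<eta> where "\<eta> = e / (2 * (V + 1))"
    have \<eta>: "\<eta> > 0" unfolding \<eta>_def using e V by simp
    have "V * e \<ge> 0" using e V by simp
    then have \<eta>V: "\<eta> * V < e" unfolding \<eta>_def using e V by (simp add: field_simps add_nonneg_pos)
    obtain \<delta> where \<delta>: "\<delta> > 0" "\<forall>u\<in>{a..b}. \<forall>v\<in>{a..b}. \<bar>u - v\<bar> < \<delta> \<longrightarrow> \<bar>f u - f v\<bar> \<le> \<eta>"
      using uc_eta[OF cf \<eta>] by blast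
    show "\<exists>\<delta>>0. \<forall>n t s. tagged a b \<delta> n t s \<longrightarrow> \<bar>rsum f g n t s - L\<bar> < e"
      using B[OF \<delta>] \<eta>V unfolding V_def by (intro exI[of _ \<delta>]) (auto intro: order.strict_trans1 \<delta>)
  qed
  then have RL: "RS_int f g a b = L"
    unfolding RS_int_def using has_RS_unique[OF ab] by blast
  show "gsum f g a b \<longlonglongrightarrow> RS_int f g a b" using L RL by simp
  show "\<And>\<eta> \<delta> n t s. \<delta> > 0 \<Longrightarrow> (\<forall>u\<in>{a..b}. \<forall>v\<in>{a..b}. \<bar>u - v\<bar> < \<delta> \<longrightarrow> \<bar>f u - f v\<bar> \<le> \<eta>)
        \<Longrightarrow> tagged a b \<delta> n t s \<Longrightarrow> \<bar>rsum f g n t s - RS_int f g a b\<bar> \<le> \<eta> * (W b - W a)"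
    using B RL by simp
qed

lemma abs_tri3:
  fixes x y z a b :: real
  shows "\<bar>x - y - z\<bar> \<le> a \<Longrightarrow> \<bar>z\<bar> \<le> b \<Longrightarrow> \<bar>x - y\<bar> \<le> a + b"
  using abs_triangle_ineq[of "x - y - z" z] by simp

lemma RS_cont:
  fixes f g W :: "real \<Rightarrow> real"
  assumes cf: "continuous_on {0..T} f" and cg: "continuous_on {0..T} g"
    and Wg: "\<And>u v. 0 \<le> u \<Longrightarrow> u \<le> v \<Longrightarrow> v \<le> T \<Longrightarrow> \<bar>g v - g u\<bar> \<le> W v - W u"
  shows "continuous_on {0..T} (\<lambda>t. RS_int f g 0 t)"
  unfolding continuous_on_iff
proof (intro ballI allI impI)
  fix t0 e :: real assume t0: "t0 \<in> {0..T}" and e: "e > 0"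
  have T: "T \<ge> 0" using t0 by simp
  define V where "V = W T - W 0"
  have Wmono: "W u \<le> W v" if "0 \<le> u" "u \<le> v" "v \<le> T" for u v
    using Wg[OF that] by simp
  have V: "V \<ge> 0" unfolding V_def using Wmono[of 0 T] T by simp
  have "bounded (f ` {0..T})" by (intro compact_imp_bounded compact_continuous_image cf) auto
  then obtain B0 where B0: "\<forall>x\<in>{0..T}. \<bar>f x\<bar> \<le> B0" unfolding bounded_iff by auto
  define B where "B = max B0 0"
  have B: "B \<ge> 0" "\<And>x. x \<in> {0..T} \<Longrightarrow> \<bar>f x\<bar> \<le> B" unfolding B_def using B0 by (auto simp: le_max_iff_disj)
  define \<eta> where "\<eta> = e / (8 * (V + 1))"
  have \<eta>: "\<eta> > 0" unfolding \<eta>_def using e V by simp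
  have VV: "V / (V + 1) \<le> 1" using V by simp
  have "\<eta> * V = (e / 8) * (V / (V + 1))" unfolding \<eta>_def by simp
  also have "\<dots> \<le> e / 8" using VV e by (intro mult_left_le) auto
  finally have \<eta>V: "2 * \<eta> * V < e / 2" using e by simp
  obtain \<delta>1 where \<delta>1: "\<delta>1 > 0" "\<forall>u\<in>{0..T}. \<forall>v\<in>{0..T}. \<bar>u - v\<bar> < \<delta>1 \<longrightarrow> \<bar>f u - f v\<bar> \<le> \<eta>"
    using uc_eta[OF cf \<eta>] by blast
  have e2: "e / (4 * (B + 1)) > 0" using e B by simp
  obtain d2 where d2: "d2 > 0" "\<forall>x'\<in>{0..T}. dist x' t0 < d2 \<longrightarrow> dist (g x') (g t0) < e / (4 * (B + 1))"
    using cg t0 e2 unfolding continuous_on_iff by metis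
  have key: "\<bar>RS_int f g 0 v - RS_int f g 0 u - f u * (g v - g u)\<bar> \<le> 2 * \<eta> * V"
    if uv: "0 \<le> u" "u \<le> v" "v \<le> T" "v - u < \<delta>1" for u v
  proof -
    have Wu: "W u - W 0 \<le> V" "W v - W 0 \<le> V" "0 \<le> W u - W 0"
      unfolding V_def using Wmono uv T by auto
    have etasub: "\<forall>x\<in>{0..c}. \<forall>y\<in>{0..c}. \<bar>x - y\<bar> < \<delta>1 \<longrightarrow> \<bar>f x - f y\<bar> \<le> \<eta>" if "c \<le> T" for c
      using \<delta>1(2) that by auto
    have cfs: "continuous_on {0..c} f" "continuous_on {0..c} g" if "c \<le> T" for c
      using cf cg that by (auto intro: continuous_on_subset)
    obtain n tt ss where P: "tagged 0 u \<delta>1 n tt ss"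
      and Pb: "\<bar>rsum f g n tt ss - RS_int f g 0 u\<bar> \<le> \<eta> * (W u - W 0)"
    proof (cases "u = 0")
      case True
      have "tagged 0 u \<delta>1 0 (\<lambda>_. 0) (\<lambda>_. 0)" unfolding tagged_def True by simp
      moreover have "\<bar>rsum f g 0 (\<lambda>_. 0) (\<lambda>_. 0) - RS_int f g 0 u\<bar> \<le> \<eta> * (W u - W 0)"
        unfolding True RS_int_same by (simp add: rsum_def)
      ultimately show ?thesis using that by blast
    next
      case False
      then have u0: "0 < u" using uv by simp
      obtain N where N: "N > 0" "(u - 0) / real N < \<delta>1" using exists_grid[OF u0 \<delta>1(1)] by blast
      have tg: "tagged 0 u \<delta>1 N (grid 0 u N) (grid 0 u N)" using tagged_grid[OF u0 N] .
      have "\<bar>rsum f g N (grid 0 u N) (grid 0 u N) - RS_int f g 0 u\<bar> \<le> \<eta> * (W u - W 0)"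
        by (rule RS_main(2)[OF u0 cfs[OF uv(3)[THEN order_trans[OF uv(2)]]] _ \<delta>1(1) etasub[of u] tg])
           (use Wg uv in auto)
      then show ?thesis using that tg by blast
    qed
    show ?thesis
    proof (cases "u = v")
      case True then show ?thesis using \<eta> V by simp
    next
      case False
      then have u_v: "u < v" using uv by simp
      then have v0: "0 < v" using uv by simp
      from P have t0': "tt 0 = 0" and tn: "tt n = u"
        and tP: "\<And>i. i < n \<Longrightarrow> tt i < tt (Suc i) \<and> tt (Suc i) - tt i < \<delta>1 \<and> tt i \<le> ss i \<and> ss i \<le> tt (Suc i)"
        unfolding tagged_def by auto
      define tt' where "tt' i = (if i \<le> n then tt i else v)" for i
      define ss' where "ss' i = (if i < n then ss i else u)" for i
      have A: "\<forall>i<Suc n. tt' i < tt' (Suc i) \<and> tt' (Suc i) - tt' i < \<delta>1 \<and> tt' i \<le> ss' i \<and> ss' i \<le> tt' (Suc i)"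
      proof (intro allI impI)
        fix i assume i: "i < Suc n"
        show "tt' i < tt' (Suc i) \<and> tt' (Suc i) - tt' i < \<delta>1 \<and> tt' i \<le> ss' i \<and> ss' i \<le> tt' (Suc i)"
        proof (cases "i < n")
          case True then show ?thesis using tP[OF True] unfolding tt'_def ss'_def by simp
        next
          case False
          then have "i = n" using i by simp
          then show ?thesis using tn u_v uv unfolding tt'_def ss'_def by simp
        qed
      qed
      have P': "tagged 0 v \<delta>1 (Suc n) tt' ss'"
        unfolding tagged_def using A t0' by (simp add: tt'_def)
      have rs: "rsum f g (Suc n) tt' ss' = rsum f g n tt ss + f u * (g v - g u)"
        unfolding rsum_def using tn by (simp add: tt'_def ss'_def)
      have "\<bar>rsum f g (Suc n) tt' ss' - RS_int f g 0 v\<bar> \<le> \<eta> * (W v - W 0)"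
        by (rule RS_main(2)[OF v0 cfs[OF uv(3)] _ \<delta>1(1) etasub[of v] P'])
           (use Wg uv in auto)
      then have "\<bar>rsum f g n tt ss + f u * (g v - g u) - RS_int f g 0 v\<bar> \<le> \<eta> * V"
        unfolding rs using Wu \<eta> by (smt (verit) mult_left_mono)
      moreover have "\<bar>rsum f g n tt ss - RS_int f g 0 u\<bar> \<le> \<eta> * V"
        using Pb Wu \<eta> by (smt (verit) mult_left_mono)
      ultimately show ?thesis by (auto simp: abs_if split: if_splits)
    qed
  qed
  show "\<exists>d>0. \<forall>x'\<in>{0..T}. dist x' t0 < d \<longrightarrow> dist (RS_int f g 0 x') (RS_int f g 0 t0) < e"
  proof (intro exI[of _ "min \<delta>1 d2"] conjI ballI impI)
    show "min \<delta>1 d2 > 0" using \<delta>1 d2 by simp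
    fix t assume t: "t \<in> {0..T}" and dt: "dist t t0 < min \<delta>1 d2"
    have gd: "\<bar>g t - g t0\<bar> < e / (4 * (B + 1))" using d2(2) t dt by (auto simp: dist_real_def)
    have fB: "\<bar>f (min t t0) * (g (max t t0) - g (min t t0))\<bar> \<le> B * (e / (4 * (B + 1)))"
    proof -
      have "\<bar>g (max t t0) - g (min t t0)\<bar> = \<bar>g t - g t0\<bar>" by (cases "t \<le> t0") (auto simp: abs_minus_commute)
      moreover have "\<bar>f (min t t0)\<bar> \<le> B" using B t t0 by (cases "t \<le> t0") auto
      ultimately show ?thesis unfolding abs_mult using gd B by (intro mult_mono) auto
    qed
    have "B * (e / (4 * (B + 1))) = (e / 4) * (B / (B + 1))" using B(1) by (simp add: field_simps)
    also have "\<dots> \<le> e / 4" using B e by (intro mult_left_le) auto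
    finally have "B * (e / (4 * (B + 1))) \<le> e / 4" .
    then have "B * (e / (4 * (B + 1))) < e / 2" using e by linarith
    moreover have "\<bar>RS_int f g 0 (max t t0) - RS_int f g 0 (min t t0) - f (min t t0) * (g (max t t0) - g (min t t0))\<bar> \<le> 2 * \<eta> * V"
      using key[of "min t t0" "max t t0"] t t0 dt by (auto simp: dist_real_def)
    ultimately have "\<bar>RS_int f g 0 (max t t0) - RS_int f g 0 (min t t0)\<bar> \<le> 2 * \<eta> * V + B * (e / (4 * (B + 1)))"
      "B * (e / (4 * (B + 1))) < e / 2"
      using abs_tri3 fB by blast+
    then have "\<bar>RS_int f g 0 (max t t0) - RS_int f g 0 (min t t0)\<bar> < e"
      using \<eta>V by linarith
    then show "dist (RS_int f g 0 t) (RS_int f g 0 t0) < e"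
      unfolding dist_real_def by (cases "t \<le> t0") (auto simp: abs_minus_commute max_def min_def)
  qed
qed

definition psum :: "(real \<Rightarrow> 'a::real_normed_vector) \<Rightarrow> nat \<Rightarrow> (nat \<Rightarrow> real) \<Rightarrow> real" where
  "psum f n t = (\<Sum>i<n. norm (f (t (Suc i)) - f (t i)))"

lemma tv_alt: "tv a b f = (SUP nt \<in> {(n, t). t 0 = a \<and> t n = b \<and> (\<forall>i<n. t i \<le> t (Suc i))}. ereal (psum f (fst nt) (snd nt)))"
  unfolding tv_def psum_def by simp

lemma tv_upper:
  assumes "t 0 = a" "t n = b" "\<forall>i<n. t i \<le> t (Suc i)"
  shows "ereal (psum f n t) \<le> tv a b f"
  unfolding tv_alt using assms by (intro SUP_upper2[of "(n, t)"]) auto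

lemma tv_ge0:
  assumes "a \<le> b" shows "tv a b f \<ge> 0"
proof -
  have "ereal (psum f 1 (\<lambda>i. if i = 0 then a else b)) \<le> tv a b f"
    using assms by (intro tv_upper) auto
  moreover have "psum f 1 (\<lambda>i. if i = 0 then a else b) \<ge> 0" unfolding psum_def by simp
  moreover have "(0::ereal) \<le> ereal (psum f 1 (\<lambda>i. if i = 0 then a else b))" using calculation(2) by simp
  ultimately show ?thesis by (meson order_trans)
qed

lemma tv_ext_le:
  assumes "u \<le> v" and P: "t 0 = a" "t n = u" "\<forall>i<n. t i \<le> t (Suc i)"
  shows "ereal (psum f n t + norm (f v - f u)) \<le> tv a v f"
proof -
  define t' where "t' i = (if i \<le> n then t i else v)" for i
  have "psum f (Suc n) t' = psum f n t + norm (f v - f u)"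
    unfolding psum_def t'_def using P by simp
  moreover have "ereal (psum f (Suc n) t') \<le> tv a v f"
  proof (rule tv_upper)
    show "t' 0 = a" "t' (Suc n) = v" using P by (auto simp: t'_def)
    show "\<forall>i<Suc n. t' i \<le> t' (Suc i)"
    proof (intro allI impI)
      fix i assume i: "i < Suc n"
      show "t' i \<le> t' (Suc i)"
      proof (cases "i < n")
        case True then show ?thesis using P by (auto simp: t'_def)
      next
        case False then have "i = n" using i by simp
        then show ?thesis using P assms(1) by (auto simp: t'_def)
      qed
    qed
  qed
  ultimately show ?thesis by simp
qed

lemma tv_main:
  fixes f :: "real \<Rightarrow> 'a::real_normed_vector"
  assumes au: "a \<le> u" and uv: "u \<le> v" and fin: "tv a v f < \<infinity>"
  shows "tv a u f = ereal (real_of_ereal (tv a u f))"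
    and "real_of_ereal (tv a u f) + norm (f v - f u) \<le> real_of_ereal (tv a v f)"
proof -
  have v0: "tv a v f \<ge> 0" using tv_ge0[of a v f] au uv by (meson order_trans)
  define Tv where "Tv = real_of_ereal (tv a v f)"
  have Tv: "tv a v f = ereal Tv" unfolding Tv_def using v0 fin by (cases "tv a v f") auto
  have "tv a u f \<le> ereal (Tv - norm (f v - f u))"
    unfolding tv_alt[of a u]
  proof (rule SUP_least)
    fix nt assume "nt \<in> {(n, t). t 0 = a \<and> t n = u \<and> (\<forall>i<n. t i \<le> t (Suc i))}"
    then obtain n t where nt: "nt = (n, t)" "t 0 = a" "t n = u" "\<forall>i<n. t i \<le> t (Suc i)" by auto
    have "ereal (psum f n t + norm (f v - f u)) \<le> ereal Tv"
      using tv_ext_le[OF uv nt(2-4), of f] Tv by simp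
    then show "ereal (psum f (fst nt) (snd nt)) \<le> ereal (Tv - norm (f v - f u))"
      using nt by simp
  qed
  moreover have u0: "tv a u f \<ge> 0" using tv_ge0[of a u f] au by simp
  ultimately obtain r where r: "tv a u f = ereal r" "r \<le> Tv - norm (f v - f u)"
    by (cases "tv a u f") auto
  then show "tv a u f = ereal (real_of_ereal (tv a u f))" by simp
  show "real_of_ereal (tv a u f) + norm (f v - f u) \<le> real_of_ereal (tv a v f)"
    using r Tv by simp
qed

definition Wf :: "(real \<Rightarrow> real^'m) \<Rightarrow> real \<Rightarrow> real" where
  "Wf x t = real_of_ereal (tv 0 t x) + t"

lemma Wf_props:
  fixes x :: "real \<Rightarrow> real^'m"
  assumes fin: "tv 0 T x < \<infinity>"
  shows "\<And>u v j. 0 \<le> u \<Longrightarrow> u \<le> v \<Longrightarrow> v \<le> T \<Longrightarrow> \<bar>aug x j v - aug x j u\<bar> \<le> Wf x v - Wf x u"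
    and "\<And>t. 0 \<le> t \<Longrightarrow> t \<le> T \<Longrightarrow> Wf x t \<ge> 0"
proof -
  have key: "real_of_ereal (tv 0 u x) + norm (x v - x u) \<le> real_of_ereal (tv 0 v x)"
    if "0 \<le> u" "u \<le> v" "v \<le> T" for u v
  proof -
    have "tv 0 v x = ereal (real_of_ereal (tv 0 v x))" using tv_main(1)[of 0 v T x] that fin by simp
    then have "tv 0 v x < \<infinity>" by (metis PInfty_neq_ereal(1) less_ereal.simps(1) ereal_less_PInfty)
    then show ?thesis using tv_main(2)[of 0 u v x] that by simp
  qed
  fix u v :: real and j :: "'m option" assume uv: "0 \<le> u" "u \<le> v" "v \<le> T"
  show "\<bar>aug x j v - aug x j u\<bar> \<le> Wf x v - Wf x u"
  proof (cases j)
    case None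
    have "0 \<le> norm (x v - x u)" by simp
    moreover have "\<bar>v - u\<bar> = v - u" using uv by simp
    ultimately show ?thesis using key[OF uv] unfolding aug_def Wf_def None by (simp only: option.case)
  next
    case (Some i)
    have "\<bar>x v $ i - x u $ i\<bar> \<le> norm (x v - x u)"
      using component_le_norm_cart[of "x v - x u" i] by simp
    then show ?thesis using key[OF uv] uv unfolding aug_def Wf_def Some by simp
  qed
next
  fix t :: real assume t: "0 \<le> t" "t \<le> T"
  have "tv 0 t x = ereal (real_of_ereal (tv 0 t x))" using tv_main(1)[of 0 t T x] t fin by simp
  moreover have "tv 0 t x \<ge> 0" using tv_ge0[of 0 t x] t by simp
  ultimately have "real_of_ereal (tv 0 t x) \<ge> 0" by (metis ereal_less_eq(5) zero_ereal_def)
  then show "Wf x t \<ge> 0" unfolding Wf_def using t by simp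
qed

lemma aug_cont:
  fixes x :: "real \<Rightarrow> real^'m"
  assumes "continuous_on {0..T} x"
  shows "continuous_on {0..T} (aug x j)"
proof (cases j)
  case None
  then show ?thesis unfolding aug_def by (simp add: continuous_on_id)
next
  case (Some i)
  have "continuous_on {0..T} (\<lambda>t. x t $ i)" by (intro continuous_on_component assms)
  then show ?thesis unfolding aug_def Some by simp
qed

fun G :: "'m option list \<Rightarrow> (real \<Rightarrow> real^'m) \<Rightarrow> real \<Rightarrow> real" where
  "G [] x t = 1"
| "G (i # J) x t = lim (\<lambda>N. gsum (\<lambda>s. G J x s) (\<lambda>s. aug x i s) 0 t N)"

lemma exp_step: "exp a * (b - a) \<le> exp b - exp a" if "a \<le> b" for a b :: real
proof -
  have "1 + (b - a) \<le> exp (b - a)" by (rule exp_ge_add_one_self)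
  then have "exp a * (1 + (b - a)) \<le> exp a * exp (b - a)" by (intro mult_left_mono) auto
  then show ?thesis by (simp add: exp_diff algebra_simps)
qed

lemma gsum_bound:
  fixes f g W :: "real \<Rightarrow> real"
  assumes t: "0 < t" and N: "N > 0"
    and Wg: "\<And>u v. 0 \<le> u \<Longrightarrow> u \<le> v \<Longrightarrow> v \<le> t \<Longrightarrow> \<bar>g v - g u\<bar> \<le> W v - W u"
    and fb: "\<And>s. 0 \<le> s \<Longrightarrow> s \<le> t \<Longrightarrow> \<bar>f s\<bar> \<le> exp (W s)"
  shows "\<bar>gsum f g 0 t N\<bar> \<le> exp (W t)"
proof -
  let ?p = "grid 0 t N"
  have pin: "?p k \<in> {0..t}" if "k \<le> N" for k using grid_in[of 0 t k N] that t N by simp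
  have pm: "?p k \<le> ?p (Suc k)" for k using t by (intro grid_mono) auto
  have "\<bar>gsum f g 0 t N\<bar> \<le> (\<Sum>k<N. \<bar>f (?p k) * (g (?p (Suc k)) - g (?p k))\<bar>)"
    unfolding gsum_def by (rule sum_abs)
  also have "\<dots> \<le> (\<Sum>k<N. exp (W (?p (Suc k))) - exp (W (?p k)))"
  proof (rule sum_mono)
    fix k assume k: "k \<in> {..<N}"
    have a: "?p k \<in> {0..t}" "?p (Suc k) \<in> {0..t}" using pin[of k] pin[of "Suc k"] k by auto
    have "\<bar>f (?p k) * (g (?p (Suc k)) - g (?p k))\<bar> = \<bar>f (?p k)\<bar> * \<bar>g (?p (Suc k)) - g (?p k)\<bar>"
      by (simp add: abs_mult)
    also have "\<dots> \<le> exp (W (?p k)) * (W (?p (Suc k)) - W (?p k))"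
      using a pm[of k] by (intro mult_mono fb Wg) auto
    also have "\<dots> \<le> exp (W (?p (Suc k))) - exp (W (?p k))"
    proof (rule exp_step)
      show "W (?p k) \<le> W (?p (Suc k))" using Wg[of "?p k" "?p (Suc k)"] a pm[of k] by auto
    qed
    finally show "\<bar>f (?p k) * (g (?p (Suc k)) - g (?p k))\<bar> \<le> exp (W (?p (Suc k))) - exp (W (?p k))" .
  qed
  also have "\<dots> = exp (W (?p N)) - exp (W (?p 0))"
    using sum_Suc_diff'[of 0 N "\<lambda>k. exp (W (?p k))"] by (simp add: atLeast0LessThan)
  also have "\<dots> \<le> exp (W t)" using N by simp
  finally show ?thesis .
qed

lemma sig_ind:
  fixes x :: "real \<Rightarrow> real^'m"
  assumes cx: "continuous_on {0..T} x" and fin: "tv 0 T x < \<infinity>"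
  shows "continuous_on {0..T} (itint (aug x) J) \<and>
    (\<forall>t\<in>{0..T}. G J x t = itint (aug x) J t \<and> \<bar>itint (aug x) J t\<bar> \<le> exp (Wf x t))"
proof (induction J)
  case Nil
  have "exp (Wf x t) \<ge> 1" if "t \<in> {0..T}" for t using Wf_props(2)[OF fin, of t] that by simp
  then show ?case by simp
next
  case (Cons i J)
  let ?f = "itint (aug x) J" and ?g = "aug x i"
  have cf: "continuous_on {0..T} ?f" and Gf: "\<And>t. t \<in> {0..T} \<Longrightarrow> G J x t = ?f t"
    and fb: "\<And>t. t \<in> {0..T} \<Longrightarrow> \<bar>?f t\<bar> \<le> exp (Wf x t)" using Cons.IH by auto
  have cg: "continuous_on {0..T} ?g" by (rule aug_cont[OF cx])
  have Wg: "\<And>u v. 0 \<le> u \<Longrightarrow> u \<le> v \<Longrightarrow> v \<le> T \<Longrightarrow> \<bar>?g v - ?g u\<bar> \<le> Wf x v - Wf x u"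
    using Wf_props(1)[OF fin] by blast
  have eq: "itint (aug x) (i # J) = (\<lambda>t. RS_int ?f ?g 0 t)" by (rule ext) simp
  have cont: "continuous_on {0..T} (itint (aug x) (i # J))"
    unfolding eq by (rule RS_cont[OF cf cg Wg])
  have pt: "G (i # J) x t = itint (aug x) (i # J) t \<and> \<bar>itint (aug x) (i # J) t\<bar> \<le> exp (Wf x t)"
    if t: "t \<in> {0..T}" for t
  proof (cases "t = 0")
    case True
    have h: "gsum (\<lambda>s. G J x s) (\<lambda>s. aug x i s) 0 0 = (\<lambda>N. 0)"
      by (rule ext) (simp add: gsum_def grid_def)
    have "G (i # J) x t = 0" unfolding True G.simps h by simp
    moreover have "itint (aug x) (i # J) t = 0" unfolding True by (simp add: RS_int_same)
    ultimately show ?thesis by simp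
  next
    case False
    then have t0: "0 < t" using t by simp
    have cfs: "continuous_on {0..t} ?f" "continuous_on {0..t} ?g"
      using cf cg t by (auto intro: continuous_on_subset)
    have Wgs: "\<And>u v. 0 \<le> u \<Longrightarrow> u \<le> v \<Longrightarrow> v \<le> t \<Longrightarrow> \<bar>?g v - ?g u\<bar> \<le> Wf x v - Wf x u"
      using Wg t by auto
    have lim: "gsum ?f ?g 0 t \<longlonglongrightarrow> RS_int ?f ?g 0 t"
      by (rule RS_main(1)[OF t0 cfs Wgs])
    have geq: "gsum (\<lambda>s. G J x s) (\<lambda>s. aug x i s) 0 t N = gsum ?f ?g 0 t N" for N
    proof (cases "N = 0")
      case True then show ?thesis unfolding gsum_def by simp
    next
      case False
      show ?thesis unfolding gsum_def
      proof (intro sum.cong refl)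
        fix k assume "k \<in> {..<N}"
        then have "grid 0 t N k \<in> {0..t}" using grid_in[of 0 t k N] t0 False by simp
        then have "G J x (grid 0 t N k) = ?f (grid 0 t N k)" using Gf t by auto
        then show "G J x (grid 0 t N k) * (aug x i (grid 0 t N (Suc k)) - aug x i (grid 0 t N k)) =
          ?f (grid 0 t N k) * (?g (grid 0 t N (Suc k)) - ?g (grid 0 t N k))" by simp
      qed
    qed
    have "gsum (\<lambda>s. G J x s) (\<lambda>s. aug x i s) 0 t = gsum ?f ?g 0 t" using geq by (rule ext)
    then have G1: "G (i # J) x t = RS_int ?f ?g 0 t"
      using limI[OF lim] by simp
    have "\<bar>RS_int ?f ?g 0 t\<bar> \<le> exp (Wf x t)"
    proof (rule tendsto_upperbound)
      show "(\<lambda>N. \<bar>gsum ?f ?g 0 t N\<bar>) \<longlonglongrightarrow> \<bar>RS_int ?f ?g 0 t\<bar>" by (intro tendsto_intros lim)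
      show "\<forall>\<^sub>F N in sequentially. \<bar>gsum ?f ?g 0 t N\<bar> \<le> exp (Wf x t)"
      proof (intro eventually_sequentiallyI[of 1])
        fix N :: nat assume "1 \<le> N"
        then show "\<bar>gsum ?f ?g 0 t N\<bar> \<le> exp (Wf x t)"
          using gsum_bound[where f = ?f and g = ?g and W = "Wf x" and N = N, OF t0 _ Wgs] fb t by auto
      qed
    qed simp
    then show ?thesis using G1 by simp
  qed
  show ?case using cont pt by blast
qed

lemma sig_G:
  fixes x :: "real \<Rightarrow> real^'m"
  assumes "continuous_on {0..T} x" "tv 0 T x < \<infinity>" "0 \<le> T"
  shows "sig T x I = G (rev I) x T" and "\<bar>sig T x I\<bar> \<le> exp (Wf x T)"
  using sig_ind[OF assms(1,2), of "rev I"] assms(3) unfolding sig_def by auto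

lemma sig_bound:
  fixes x :: "real \<Rightarrow> real^'m"
  assumes "continuous_on {0..T} x" "tv 0 T x < ereal CX" "0 \<le> T"
  shows "\<bar>sig T x I\<bar> \<le> exp (CX + T)"
proof -
  have fin: "tv 0 T x < \<infinity>" using assms(2) by (metis ereal_less_PInfty order.strict_trans)
  have "tv 0 T x = ereal (real_of_ereal (tv 0 T x))" using tv_main(1)[of 0 T T x] fin assms(3) by simp
  then have "real_of_ereal (tv 0 T x) < CX" using assms(2) by (metis ereal_less(2) less_ereal.simps(1))
  then have "Wf x T \<le> CX + T" unfolding Wf_def by simp
  then show ?thesis using sig_G(2)[OF assms(1) fin assms(3), of I] by (meson exp_le_cancel_iff order_trans)
qed

lemma aug_meas: "(\<lambda>x. aug x i s) \<in> borel_measurable (Pi\<^sub>M UNIV (\<lambda>_. borel :: (real^'m) measure))"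
proof (cases i)
  case None
  then show ?thesis unfolding aug_def by simp
next
  case (Some j)
  have c: "(\<lambda>v::real^'m. v $ j) \<in> borel_measurable borel"
    by (intro borel_measurable_continuous_onI continuous_on_component continuous_on_id)
  have "(\<lambda>x::real \<Rightarrow> real^'m. x s) \<in> measurable (Pi\<^sub>M UNIV (\<lambda>_. borel)) borel"
    using measurable_component_singleton[of s UNIV "\<lambda>_. borel :: (real^'m) measure"] by simp
  then have "(\<lambda>x::real \<Rightarrow> real^'m. x s $ j) \<in> borel_measurable (Pi\<^sub>M UNIV (\<lambda>_. borel))"
    using measurable_compose[OF _ c] by blast
  then show ?thesis unfolding aug_def Some by simp
qed

lemma G_meas: "(\<lambda>x. G J x t) \<in> borel_measurable (Pi\<^sub>M UNIV (\<lambda>_. borel :: (real^'m) measure))"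
proof (induction J arbitrary: t)
  case Nil then show ?case by simp
next
  case (Cons i J)
  have "(\<lambda>x. gsum (\<lambda>s. G J x s) (\<lambda>s. aug x i s) 0 t N) \<in> borel_measurable (Pi\<^sub>M UNIV (\<lambda>_. borel :: (real^'m) measure))" for N
    unfolding gsum_def
    by (intro borel_measurable_sum borel_measurable_times borel_measurable_diff Cons.IH aug_meas)
  then show ?case unfolding G.simps by (rule borel_measurable_lim_metric)
qed

definition Lat :: "'j set \<Rightarrow> nat \<Rightarrow> ('j \<Rightarrow> int) set" where
  "Lat A R = {m. (\<forall>j. j \<notin> A \<longrightarrow> m j = 0) \<and> (\<Sum>j\<in>A. \<bar>m j\<bar>) \<le> int R}"

lemma pow_rev_sum: "(\<Sum>j\<le>R. (2::nat) ^ (R - j)) < 2 ^ Suc R"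
proof (induction R)
  case 0 then show ?case by simp
next
  case (Suc R)
  have "(\<Sum>j\<le>Suc R. (2::nat) ^ (Suc R - j)) = (\<Sum>j\<le>R. 2 ^ (Suc R - j)) + 1"
    by (simp add: sum.atMost_Suc)
  also have "(\<Sum>j\<le>R. (2::nat) ^ (Suc R - j)) = 2 * (\<Sum>j\<le>R. 2 ^ (R - j))"
    by (simp add: sum_distrib_left Suc_diff_le)
  finally show ?case using Suc by simp
qed

lemma Lat_card: "finite A \<Longrightarrow> finite (Lat A R) \<and> card (Lat A R) \<le> 2 ^ (R + 2 * card A)"
proof (induction A arbitrary: R rule: finite_induct)
  case empty
  have e: "Lat {} R = {\<lambda>_. 0}" unfolding Lat_def by auto
  show ?case unfolding e by simp
next
  case (insert a A)
  define S where "S = (SIGMA s:(UNIV::bool set). SIGMA j:{..R}. Lat A (R - j))"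
  define \<phi> :: "bool \<times> nat \<times> ('a \<Rightarrow> int) \<Rightarrow> ('a \<Rightarrow> int)"
    where "\<phi> = (\<lambda>(s, j, m'). m'(a := (if s then int j else - int j)))"
  have sub: "Lat (insert a A) R \<subseteq> \<phi> ` S"
  proof
    fix m assume m: "m \<in> Lat (insert a A) R"
    define j where "j = nat \<bar>m a\<bar>"
    define m' where "m' = m(a := 0)"
    have sumeq: "(\<Sum>i\<in>insert a A. \<bar>m i\<bar>) = \<bar>m a\<bar> + (\<Sum>i\<in>A. \<bar>m i\<bar>)" using insert by simp
    have sA: "(\<Sum>i\<in>A. \<bar>m' i\<bar>) = (\<Sum>i\<in>A. \<bar>m i\<bar>)" unfolding m'_def using insert(2) by (intro sum.cong) auto
    have nn: "(\<Sum>i\<in>A. \<bar>m i\<bar>) \<ge> 0" by (intro sum_nonneg) auto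
    have le: "\<bar>m a\<bar> + (\<Sum>i\<in>A. \<bar>m i\<bar>) \<le> int R" using m sumeq unfolding Lat_def by simp
    have jR: "j \<le> R" unfolding j_def using le nn by linarith
    have "m' \<in> Lat A (R - j)"
      unfolding Lat_def
    proof (intro CollectI conjI allI impI)
      fix i assume "i \<notin> A"
      then show "m' i = 0" using m unfolding m'_def Lat_def by auto
    next
      show "(\<Sum>i\<in>A. \<bar>m' i\<bar>) \<le> int (R - j)" using sA le jR unfolding j_def by simp
    qed
    moreover have "m = \<phi> (0 \<le> m a, j, m')" unfolding \<phi>_def m'_def j_def by (rule ext) auto
    ultimately show "m \<in> \<phi> ` S" unfolding S_def using jR by force
  qed
  have fin: "\<And>R. finite (Lat A R)" and cb: "\<And>R. card (Lat A R) \<le> 2 ^ (R + 2 * card A)"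
    using insert.IH by auto
  have finS: "finite S" unfolding S_def using fin by (auto intro!: finite_SigmaI)
  have "card S = (\<Sum>s\<in>(UNIV::bool set). \<Sum>j\<le>R. card (Lat A (R - j)))"
    unfolding S_def using fin by (simp add: card_SigmaI)
  also have "\<dots> \<le> (\<Sum>s\<in>(UNIV::bool set). \<Sum>j\<le>R. 2 ^ (R - j + 2 * card A))"
    by (intro sum_mono cb)
  also have "\<dots> = 2 * (\<Sum>j\<le>R. 2 ^ (R - j + 2 * card A))" by simp
  also have "2 * (\<Sum>j\<le>R. (2::nat) ^ (R - j + 2 * card A)) = 2 * (2 ^ (2 * card A) * (\<Sum>j\<le>R. 2 ^ (R - j)))"
  proof -
    have "(\<Sum>j\<le>R. (2::nat) ^ (R - j + 2 * card A)) = (\<Sum>j\<le>R. 2 ^ (2 * card A) * 2 ^ (R - j))"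
      by (intro sum.cong refl) (simp only: power_add mult.commute)
    then show ?thesis by (simp add: sum_distrib_left)
  qed
  also have "\<dots> \<le> 2 * (2 ^ (2 * card A) * 2 ^ Suc R)"
    using pow_rev_sum[of R] by (intro mult_left_mono) auto
  also have "\<dots> = 2 ^ (R + 2 * card (insert a A))"
    using insert by (simp add: power_add)
  finally have cS: "card S \<le> 2 ^ (R + 2 * card (insert a A))" .
  have "finite (Lat (insert a A) R)" using sub finS by (meson finite_imageI finite_subset)
  moreover have "card (Lat (insert a A) R) \<le> card S"
    using sub finS by (meson card_image_le card_mono finite_imageI order_trans)
  ultimately show ?case using cS by simp
qed

definition tr0 :: "real \<Rightarrow> int" where
  "tr0 x = (if x \<ge> 0 then \<lfloor>x\<rfloor> else \<lceil>x\<rceil>)"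

lemma tr0_props: "\<bar>real_of_int (tr0 x)\<bar> \<le> \<bar>x\<bar>" "\<bar>x - real_of_int (tr0 x)\<bar> \<le> 1"
proof -
  have f: "real_of_int \<lfloor>x\<rfloor> \<le> x" "x < real_of_int \<lfloor>x\<rfloor> + 1" using floor_correct[of x] by auto
  have c: "x \<le> real_of_int \<lceil>x\<rceil>" "real_of_int \<lceil>x\<rceil> - 1 < x" using ceiling_correct[of x] by auto
  show "\<bar>real_of_int (tr0 x)\<bar> \<le> \<bar>x\<bar>"
  proof (cases "x \<ge> 0")
    case True
    then have "0 \<le> real_of_int \<lfloor>x\<rfloor>" by simp
    then show ?thesis unfolding tr0_def using True f by simp
  next
    case False
    then have "real_of_int \<lceil>x\<rceil> \<le> 0" by simp
    then show ?thesis unfolding tr0_def using False c by simp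
  qed
  show "\<bar>x - real_of_int (tr0 x)\<bar> \<le> 1"
  proof (cases "x \<ge> 0")
    case True
    then have "tr0 x = \<lfloor>x\<rfloor>" unfolding tr0_def by simp
    then show ?thesis unfolding abs_le_iff using f by linarith
  next
    case False
    then have "tr0 x = \<lceil>x\<rceil>" unfolding tr0_def by simp
    then show ?thesis unfolding abs_le_iff using c by linarith
  qed
qed

definition l1 :: "'j set \<Rightarrow> ('j \<Rightarrow> real) \<Rightarrow> ('j \<Rightarrow> real) \<Rightarrow> real" where
  "l1 A a b = (\<Sum>j\<in>A. \<bar>a j - b j\<bar>)"

lemma l1_tri: "l1 A a c \<le> l1 A a b + l1 A b c"
  unfolding l1_def sum.distrib[symmetric] by (intro sum_mono) linarith

lemma l1_sym: "l1 A a b = l1 A b a"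
  unfolding l1_def by (intro sum.cong) auto

definition hh :: "'j set \<Rightarrow> real \<Rightarrow> nat \<Rightarrow> real" where
  "hh A r k = r / (2 ^ k * card A)"

definition proj :: "'j set \<Rightarrow> real \<Rightarrow> nat \<Rightarrow> ('j \<Rightarrow> real) \<Rightarrow> ('j \<Rightarrow> real)" where
  "proj A r k \<theta> = (if k = 0 then (\<lambda>_. 0) else
     (\<lambda>j. if j \<in> A then hh A r k * real_of_int (tr0 (\<theta> j / hh A r k)) else 0))"

definition Net :: "'j set \<Rightarrow> real \<Rightarrow> nat \<Rightarrow> ('j \<Rightarrow> real) set" where
  "Net A r k = (if k = 0 then {\<lambda>_. 0} else
     (\<lambda>m j. hh A r k * real_of_int (m j)) ` Lat A (card A * 2 ^ k))"

lemma Net_card: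
  assumes "finite A" "A \<noteq> {}"
  shows "finite (Net A r k) \<and> card (Net A r k) \<le> 2 ^ (3 * card A * 2 ^ k)"
proof (cases "k = 0")
  case True then show ?thesis unfolding Net_def by simp
next
  case False
  have D: "card A \<ge> 1" using assms by (simp add: Suc_le_eq card_gt_0_iff)
  have L: "finite (Lat A (card A * 2 ^ k))" "card (Lat A (card A * 2 ^ k)) \<le> 2 ^ (card A * 2 ^ k + 2 * card A)"
    using Lat_card[OF assms(1)] by auto
  have "card A * 2 ^ k + 2 * card A \<le> 3 * card A * 2 ^ k"
  proof -
    have "2 * card A \<le> 2 * card A * 2 ^ k" by simp
    then show ?thesis by simp
  qed
  then have "(2::nat) ^ (card A * 2 ^ k + 2 * card A) \<le> 2 ^ (3 * card A * 2 ^ k)" by (intro power_increasing) auto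
  moreover have e: "Net A r k = (\<lambda>m j. hh A r k * real_of_int (m j)) ` Lat A (card A * 2 ^ k)"
    using False by (simp add: Net_def)
  ultimately show ?thesis unfolding e using L
    by (meson card_image_le finite_imageI order_trans)
qed

lemma proj_props:
  assumes fin: "finite A" and ne: "A \<noteq> {}" and r: "r > 0" and th: "(\<Sum>j\<in>A. \<bar>\<theta> j\<bar>) \<le> r"
  shows "proj A r k \<theta> \<in> Net A r k" and "l1 A \<theta> (proj A r k \<theta>) \<le> r / 2 ^ k"
proof -
  have D: "card A > 0" using fin ne by (simp add: card_gt_0_iff)
  have "proj A r k \<theta> \<in> Net A r k \<and> l1 A \<theta> (proj A r k \<theta>) \<le> r / 2 ^ k"
  proof (cases "k = 0")
    case True
    then show ?thesis using th unfolding proj_def Net_def l1_def by simp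
  next
    case False
    define h where "h = hh A r k"
    have h: "h > 0" unfolding h_def hh_def using r D by simp
    define m where "m j = (if j \<in> A then tr0 (\<theta> j / h) else 0)" for j
    have pe: "proj A r k \<theta> = (\<lambda>j. h * real_of_int (m j))"
      unfolding proj_def m_def h_def using False by (auto intro!: ext)
    have "real_of_int (\<Sum>j\<in>A. \<bar>m j\<bar>) = (\<Sum>j\<in>A. \<bar>real_of_int (tr0 (\<theta> j / h))\<bar>)"
      unfolding m_def by simp
    also have "\<dots> \<le> (\<Sum>j\<in>A. \<bar>\<theta> j / h\<bar>)" by (intro sum_mono tr0_props)
    also have "\<dots> = (\<Sum>j\<in>A. \<bar>\<theta> j\<bar>) / h" using h by (simp add: sum_divide_distrib)
    also have "\<dots> \<le> r / h" using th h by (intro divide_right_mono) auto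
    also have "\<dots> = real (card A * 2 ^ k)" unfolding h_def hh_def using r D by simp
    finally have "(\<Sum>j\<in>A. \<bar>m j\<bar>) \<le> int (card A * 2 ^ k)" by linarith
    then have "m \<in> Lat A (card A * 2 ^ k)" unfolding Lat_def m_def by auto
    then have mem: "proj A r k \<theta> \<in> Net A r k" unfolding pe Net_def h_def using False by auto
    have "l1 A \<theta> (proj A r k \<theta>) = (\<Sum>j\<in>A. h * \<bar>\<theta> j / h - real_of_int (tr0 (\<theta> j / h))\<bar>)"
      unfolding l1_def pe
    proof (intro sum.cong refl)
      fix j assume j: "j \<in> A"
      have "\<theta> j - h * real_of_int (m j) = h * (\<theta> j / h - real_of_int (tr0 (\<theta> j / h)))"
        using h j unfolding m_def by (simp add: field_simps)
      then show "\<bar>\<theta> j - h * real_of_int (m j)\<bar> = h * \<bar>\<theta> j / h - real_of_int (tr0 (\<theta> j / h))\<bar>"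
        using h by (simp add: abs_mult)
    qed
    also have "\<dots> \<le> (\<Sum>j\<in>A. h * 1)" using h by (intro sum_mono mult_left_mono tr0_props) auto
    also have "\<dots> = r / 2 ^ k" unfolding h_def hh_def using D by simp
    finally show ?thesis using mem by simp
  qed
  then show "proj A r k \<theta> \<in> Net A r k" and "l1 A \<theta> (proj A r k \<theta>) \<le> r / 2 ^ k" by auto
qed

lemma real_le_two_pow: "real k \<le> (2::real) ^ k"
proof -
  have "k < 2 ^ k" by (rule less_exp)
  then have "real k < real (2 ^ k)" by (simp only: of_nat_less_iff)
  then show ?thesis by simp
qed

lemma num_term:
  fixes Q D :: real and k :: nat
  assumes D: "D \<ge> 1" and Q: "Q \<ge> 20000 * D"
  shows "exp (6 * D * 2 ^ k) * (2 * exp (- (Q * (3/2) ^ (2 * k) / 648))) \<le> 2 * exp (- Q / 9216) * (1/2) ^ k"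
proof -
  define E :: real where "E = (3/2) ^ (2 * k)"
  have E: "E \<ge> 2 ^ k"
  proof -
    have "E = ((3/2)^2) ^ k" unfolding E_def by (simp only: power_mult)
    also have "((3/2::real)^2) = 9/4" by (simp add: power2_eq_square)
    finally have "E = (9/4) ^ k" .
    moreover have "(2::real) ^ k \<le> (9/4) ^ k" by (intro power_mono) auto
    ultimately show ?thesis by simp
  qed
  have p1: "(2::real) ^ k \<ge> 1" by simp
  have pk: "real k \<le> 2 ^ k" by (rule real_le_two_pow)
  have Q0: "Q \<ge> 0" using Q D by simp
  have a1: "Q * E \<ge> Q * 2 ^ k" using E Q0 by (intro mult_left_mono) auto
  have a2: "Q * 2 ^ k \<ge> 20000 * D * 2 ^ k" using Q by (intro mult_right_mono) auto
  have a3: "Q * 2 ^ k \<ge> Q" using p1 Q0 by (simp add: mult_le_cancel_left1)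
  have a4: "D * 2 ^ k \<ge> 2 ^ k" using D p1 by simp
  have ex: "6 * D * 2 ^ k - Q * E / 648 \<le> - Q / 9216 - real k"
    using a1 a2 a3 a4 pk by linarith
  have "exp (6 * D * 2 ^ k) * (2 * exp (- (Q * E / 648))) = 2 * exp (6 * D * 2 ^ k - Q * E / 648)"
    by (simp add: mult.left_commute exp_add[symmetric])
  also have "\<dots> \<le> 2 * exp (- Q / 9216 + - real k)" using ex by simp
  also have "\<dots> = 2 * exp (- Q / 9216) * exp (- real k)"
    by (simp only: exp_add mult.assoc)
  also have "2 * exp (- Q / 9216) * exp (- real k) = 2 * exp (- Q / 9216) * exp (- 1) ^ k"
    using exp_of_nat_mult[of k "-1"] by simp
  also have "\<dots> \<le> 2 * exp (- Q / 9216) * (1/2) ^ k"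
  proof -
    have "2 \<le> exp (1::real)" using exp_ge_add_one_self[of 1] by simp
    then have "exp (- 1) \<le> (1/2::real)" by (simp add: exp_minus field_simps)
    then have "exp (- 1) ^ k \<le> (1/2::real) ^ k" by (intro power_mono) auto
    then show ?thesis by (intro mult_left_mono) auto
  qed
  finally show ?thesis unfolding E_def .
qed

lemma half_sum: "(\<Sum>k\<in>{1..K}. (1/2::real) ^ k) = 1 - (1/2) ^ K"
  by (induction K) (simp_all add: atLeastAtMostSuc_conv)

lemma t_sum: "(\<Sum>k<K. (3/4::real) ^ Suc k) \<le> 3"
proof -
  have "(\<Sum>k<K. (3/4::real) ^ Suc k) = 3/4 * (\<Sum>k<K. (3/4) ^ k)" by (simp add: sum_distrib_left)
  also have "\<dots> = 3 * (1 - (3/4) ^ K)" by (simp add: sum_gp_strict)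
  also have "\<dots> \<le> 3" by simp
  finally show ?thesis .
qed

lemma two_pow_exp: "(2::real) ^ m \<le> exp (real m)"
proof -
  have "2 \<le> exp (1::real)" using exp_ge_add_one_self[of 1] by simp
  then have "(2::real) ^ m \<le> exp 1 ^ m" by (intro power_mono) auto
  then show ?thesis by (simp add: exp_of_nat_mult[symmetric])
qed

lemma chaining:
  fixes M :: "'w measure" and A :: "'j set" and Lt :: "('j \<Rightarrow> real) \<Rightarrow> nat \<Rightarrow> 'w \<Rightarrow> real"
    and Rp :: "('j \<Rightarrow> real) \<Rightarrow> real" and n :: nat and r \<beta> \<epsilon> :: real
  assumes P: "prob_space M" and fin: "finite A" and ne: "A \<noteq> {}" and n: "n > 0"
    and r: "r > 0" and \<beta>: "\<beta> > 0" and \<epsilon>: "\<epsilon> > 0"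
    and big: "real n * \<epsilon>\<^sup>2 \<ge> 20000 * real (card A) * \<beta>\<^sup>2 * r\<^sup>2"
    and meas: "\<And>a i. Lt a i \<in> borel_measurable M"
    and indep: "\<And>a b. prob_space.indep_vars M (\<lambda>_. borel) (\<lambda>i \<omega>. Lt a i \<omega> - Lt b i \<omega>) {..<n}"
    and integ: "\<And>a i. i < n \<Longrightarrow> integrable M (Lt a i)"
    and expect: "\<And>a i. i < n \<Longrightarrow> integral\<^sup>L M (Lt a i) = Rp a"
    and lipAE: "AE \<omega> in M. \<forall>i<n. \<forall>a b. \<bar>Lt a i \<omega> - Lt b i \<omega>\<bar> \<le> \<beta> * l1 A a b"
    and lipR: "\<And>a b. \<bar>Rp a - Rp b\<bar> \<le> \<beta> * l1 A a b"
    and zero: "\<And>i \<omega>. i < n \<Longrightarrow> \<omega> \<in> space M \<Longrightarrow> Lt (\<lambda>_. 0) i \<omega> = Rp (\<lambda>_. 0)"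
  shows "\<exists>U\<in>sets M. {\<omega>\<in>space M. \<exists>\<theta>. (\<Sum>j\<in>A. \<bar>\<theta> j\<bar>) \<le> r \<and> \<bar>(\<Sum>i<n. Lt \<theta> i \<omega>) / n - Rp \<theta>\<bar> > \<epsilon>} \<subseteq> U
           \<and> measure M U \<le> 2 * exp (- (real n * \<epsilon>\<^sup>2 / (9216 * \<beta>\<^sup>2 * r\<^sup>2)))"
proof -
  interpret prob_space M by (rule P)
  define D where "D = card A"
  have D: "D \<ge> 1" unfolding D_def using fin ne by (simp add: Suc_le_eq card_gt_0_iff)
  define Q where "Q = real n * \<epsilon>\<^sup>2 / (\<beta>\<^sup>2 * r\<^sup>2)"
  have Q: "Q \<ge> 20000 * real D"
    unfolding Q_def D_def using big \<beta> r by (simp add: field_simps)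
  define \<delta> :: "nat \<Rightarrow> real" where "\<delta> k = r / 2 ^ k" for k
  define t :: "nat \<Rightarrow> real" where "t k = \<epsilon> * (3/4) ^ k / 6" for k
  define c :: "nat \<Rightarrow> real" where "c k = 3 * \<beta> * \<delta> k" for k
  define Pk where "Pk k = {ab. fst ab \<in> Net A r k \<and> snd ab \<in> Net A r (k - 1) \<and> l1 A (fst ab) (snd ab) \<le> 3 * \<delta> k}" for k
  define Z where "Z a b i \<omega> = Lt a i \<omega> - Lt b i \<omega>" for a b i \<omega>
  define Bad where "Bad k a b = {\<omega>\<in>space M. \<bar>(\<Sum>i\<in>{..<n}. Z a b i \<omega>) - (\<Sum>i\<in>{..<n}. expectation (Z a b i))\<bar> \<ge> real n * t k}" for k a b
  have \<delta>pos: "\<delta> k > 0" for k unfolding \<delta>_def using r by simp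
  have tpos: "t k > 0" for k unfolding t_def using \<epsilon> by simp
  obtain K0 :: nat where K0: "4 * \<beta> * r / \<epsilon> < 2 ^ K0" using real_arch_pow[of 2] by auto
  define K where "K = Suc K0"
  have K1: "K \<ge> 1" unfolding K_def by simp
  have K: "2 * \<beta> * \<delta> K \<le> \<epsilon> / 2"
  proof -
    have "4 * \<beta> * r < \<epsilon> * 2 ^ K0" using K0 \<epsilon> by (simp add: field_simps)
    moreover have "0 < \<beta> * r" using \<beta> r by simp
    ultimately have "4 * \<beta> * r \<le> \<epsilon> * 2 ^ K0 * 2" by linarith
    then have "4 * \<beta> * r \<le> \<epsilon> * 2 ^ K" unfolding K_def by (simp add: mult.commute mult.left_commute)
    then show ?thesis unfolding \<delta>_def by (simp add: field_simps)
  qed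
  obtain N where N: "\<And>\<omega>. \<omega> \<in> space M - N \<Longrightarrow> \<forall>i<n. \<forall>a b. \<bar>Lt a i \<omega> - Lt b i \<omega>\<bar> \<le> \<beta> * l1 A a b"
    and Nnull: "N \<in> null_sets M"
    using AE_E3[OF lipAE] by blast
  have Zmeas: "Z a b i \<in> borel_measurable M" for a b i unfolding Z_def using meas by measurable
  have Bad_sets: "Bad k a b \<in> sets M" for k a b
    unfolding Bad_def using Zmeas by measurable
  have EZ: "expectation (Z a b i) = Rp a - Rp b" if "i < n" for a b i
    unfolding Z_def using integ[OF that] expect[OF that] by simp
  have hoeff: "prob (Bad k a b) \<le> 2 * exp (- (real n * t k ^ 2 / (18 * \<beta>\<^sup>2 * \<delta> k ^ 2)))"
    if ab: "l1 A a b \<le> 3 * \<delta> k" for k a b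
  proof -
    have cpos: "c k > 0" unfolding c_def using \<beta> \<delta>pos by simp
    interpret H: Hoeffding_ineq M "{..<n}" "Z a b" "\<lambda>_. - c k" "\<lambda>_. c k" "\<Sum>i\<in>{..<n}. expectation (Z a b i)"
    proof unfold_locales
      show "finite {..<n}" by simp
      show "indep_vars (\<lambda>_. borel) (Z a b) {..<n}" using indep[of a b] unfolding Z_def by simp
      fix i assume i: "i \<in> {..<n}"
      show "AE x in M. Z a b i x \<in> {- c k..c k}"
      proof (rule AE_mp[OF lipAE], intro AE_I2 impI)
        fix x assume "\<forall>i<n. \<forall>a b. \<bar>Lt a i x - Lt b i x\<bar> \<le> \<beta> * l1 A a b"
        then have "\<bar>Z a b i x\<bar> \<le> \<beta> * l1 A a b" using i unfolding Z_def by auto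
        also have "\<dots> \<le> c k" unfolding c_def using ab \<beta> by (simp add: mult_left_mono)
        finally show "Z a b i x \<in> {- c k..c k}" by (simp add: abs_le_iff)
      qed
    qed simp
    have s: "(\<Sum>i\<in>{..<n}. (c k - - c k)\<^sup>2) = real n * (2 * c k)\<^sup>2" by simp
    have "prob (Bad k a b) \<le> 2 * exp (- 2 * (real n * t k)\<^sup>2 / (\<Sum>i\<in>{..<n}. (c k - - c k)\<^sup>2))"
      unfolding Bad_def
      by (rule H.Hoeffding_ineq_abs_ge) (use n cpos in \<open>auto simp: s intro!: mult_nonneg_nonneg less_imp_le[OF tpos]\<close>)
    also have "- 2 * (real n * t k)\<^sup>2 / (\<Sum>i\<in>{..<n}. (c k - - c k)\<^sup>2) = - (real n * t k ^ 2 / (18 * \<beta>\<^sup>2 * \<delta> k ^ 2))"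
      unfolding s c_def using n \<beta> \<delta>pos by (simp add: field_simps power2_eq_square)
    finally show ?thesis .
  qed
  define U where "U = N \<union> (\<Union>k\<in>{1..K}. \<Union>ab\<in>Pk k. Bad k (fst ab) (snd ab))"
  have finNet: "finite (Net A r k)" and cardNet: "card (Net A r k) \<le> 2 ^ (3 * D * 2 ^ k)" for k
    using Net_card[OF fin ne, of r k] unfolding D_def by auto
  have finPk: "finite (Pk k)" for k
  proof -
    have "Pk k \<subseteq> Net A r k \<times> Net A r (k - 1)" unfolding Pk_def by auto
    then show ?thesis using finNet by (meson finite_SigmaI finite_subset)
  qed
  have cardPk: "real (card (Pk k)) \<le> exp (6 * real D * 2 ^ k)" if k: "k \<ge> 1" for k
  proof -
    have "Pk k \<subseteq> Net A r k \<times> Net A r (k - 1)" unfolding Pk_def by auto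
    then have "card (Pk k) \<le> card (Net A r k) * card (Net A r (k - 1))"
      using finNet by (metis card_cartesian_product card_mono finite_SigmaI)
    also have "\<dots> \<le> 2 ^ (3 * D * 2 ^ k) * 2 ^ (3 * D * 2 ^ (k - 1))"
      by (intro mult_mono cardNet) auto
    also have "\<dots> \<le> 2 ^ (3 * D * 2 ^ k) * 2 ^ (3 * D * 2 ^ k)"
      by (intro mult_left_mono power_increasing) auto
    also have "\<dots> = 2 ^ (6 * D * 2 ^ k)" by (simp add: power_add[symmetric])
    finally have "real (card (Pk k)) \<le> real ((2::nat) ^ (6 * D * 2 ^ k))" by (simp only: of_nat_le_iff)
    also have "\<dots> = (2::real) ^ (6 * D * 2 ^ k)" by simp
    also have "\<dots> \<le> exp (real (6 * D * 2 ^ k))" by (rule two_pow_exp)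
    finally show ?thesis by simp
  qed
  have Nsets: "N \<in> sets M" using Nnull by (simp add: null_sets_def)
  have U_sets: "U \<in> sets M" unfolding U_def using Nsets Bad_sets finPk
    by (intro sets.Un sets.finite_UN) auto
  have Ubound: "measure M U \<le> 2 * exp (- (real n * \<epsilon>\<^sup>2 / (9216 * \<beta>\<^sup>2 * r\<^sup>2)))"
  proof -
    define B where "B k = 2 * exp (- (real n * t k ^ 2 / (18 * \<beta>\<^sup>2 * \<delta> k ^ 2)))" for k
    have Beq: "B k = 2 * exp (- (Q * (3/2) ^ (2 * k) / 648))" for k
    proof -
      have td: "t k / \<delta> k = \<epsilon> / (6 * r) * (3/2) ^ k"
      proof -
        have "t k / \<delta> k = \<epsilon> / (6 * r) * ((3/4) ^ k * 2 ^ k)" unfolding t_def \<delta>_def using r by (simp add: field_simps)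
        also have "(3/4::real) ^ k * 2 ^ k = (3/2) ^ k" by (simp add: power_mult_distrib[symmetric])
        finally show ?thesis .
      qed
      have "real n * t k ^ 2 / (18 * \<beta>\<^sup>2 * \<delta> k ^ 2) = real n * (t k / \<delta> k) ^ 2 / (18 * \<beta>\<^sup>2)"
        by (simp add: power_divide)
      also have "\<dots> = real n * \<epsilon>\<^sup>2 / (\<beta>\<^sup>2 * r\<^sup>2) * ((3/2) ^ k) ^ 2 / 648"
        unfolding td using r \<beta> by (simp add: power_mult_distrib power_divide field_simps)
      also have "((3/2::real) ^ k) ^ 2 = (3/2) ^ (2 * k)" by (simp add: power_mult[symmetric] mult.commute)
      finally show ?thesis unfolding B_def Q_def by simp
    qed
    have mN: "measure M N = 0" using Nnull by (auto simp: null_sets_def measure_def)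
    have "measure M U \<le> measure M N + measure M (\<Union>k\<in>{1..K}. \<Union>ab\<in>Pk k. Bad k (fst ab) (snd ab))"
      unfolding U_def using Nsets Bad_sets finPk by (intro measure_Un_le sets.finite_UN) auto
    also have "\<dots> = measure M (\<Union>k\<in>{1..K}. \<Union>ab\<in>Pk k. Bad k (fst ab) (snd ab))" using mN by simp
    also have "\<dots> \<le> (\<Sum>k\<in>{1..K}. measure M (\<Union>ab\<in>Pk k. Bad k (fst ab) (snd ab)))"
      using Bad_sets finPk by (intro measure_UNION_le) auto
    also have "\<dots> \<le> (\<Sum>k\<in>{1..K}. \<Sum>ab\<in>Pk k. measure M (Bad k (fst ab) (snd ab)))"
      using Bad_sets finPk by (intro sum_mono measure_UNION_le) auto
    also have "\<dots> \<le> (\<Sum>k\<in>{1..K}. real (card (Pk k)) * B k)"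
    proof (intro sum_mono sum_bounded_above)
      fix k ab assume "ab \<in> Pk k"
      then have "l1 A (fst ab) (snd ab) \<le> 3 * \<delta> k" unfolding Pk_def by simp
      then show "measure M (Bad k (fst ab) (snd ab)) \<le> B k" unfolding B_def by (rule hoeff)
    qed
    also have "\<dots> \<le> (\<Sum>k\<in>{1..K}. 2 * exp (- Q / 9216) * (1/2) ^ k)"
    proof (intro sum_mono)
      fix k assume k: "k \<in> {1..K}"
      have "real (card (Pk k)) * B k \<le> exp (6 * real D * 2 ^ k) * B k"
        using cardPk[of k] k unfolding B_def by (intro mult_right_mono) auto
      also have "\<dots> \<le> 2 * exp (- Q / 9216) * (1/2) ^ k"
        unfolding Beq using num_term[of "real D" Q k] D Q by simp
      finally show "real (card (Pk k)) * B k \<le> 2 * exp (- Q / 9216) * (1/2) ^ k" .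
    qed
    also have "\<dots> = 2 * exp (- Q / 9216) * (1 - (1/2) ^ K)"
      by (simp only: sum_distrib_left[symmetric] half_sum)
    also have "\<dots> \<le> 2 * exp (- Q / 9216)" by simp
    also have "- Q / 9216 = - (real n * \<epsilon>\<^sup>2 / (9216 * \<beta>\<^sup>2 * r\<^sup>2))" unfolding Q_def by simp
    finally show ?thesis .
  qed
  have incl: "{\<omega>\<in>space M. \<exists>\<theta>. (\<Sum>j\<in>A. \<bar>\<theta> j\<bar>) \<le> r \<and> \<bar>(\<Sum>i<n. Lt \<theta> i \<omega>) / n - Rp \<theta>\<bar> > \<epsilon>} \<subseteq> U"
  proof (rule subsetI, rule ccontr)
    fix \<omega> assume "\<omega> \<in> {\<omega>\<in>space M. \<exists>\<theta>. (\<Sum>j\<in>A. \<bar>\<theta> j\<bar>) \<le> r \<and> \<bar>(\<Sum>i<n. Lt \<theta> i \<omega>) / n - Rp \<theta>\<bar> > \<epsilon>}"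
    then obtain \<theta> where \<omega>: "\<omega> \<in> space M" and th: "(\<Sum>j\<in>A. \<bar>\<theta> j\<bar>) \<le> r"
      and big_dev: "\<bar>(\<Sum>i<n. Lt \<theta> i \<omega>) / n - Rp \<theta>\<bar> > \<epsilon>" by blast
    assume nU: "\<omega> \<notin> U"
    then have lip: "\<forall>i<n. \<forall>a b. \<bar>Lt a i \<omega> - Lt b i \<omega>\<bar> \<le> \<beta> * l1 A a b" using N \<omega> unfolding U_def by blast
    have nBad: "\<omega> \<notin> Bad k a b" if "k \<in> {1..K}" "(a, b) \<in> Pk k" for k a b
      using nU that unfolding U_def by force
    define Dev where "Dev a = (\<Sum>i<n. Lt a i \<omega>) / n - Rp a" for a
    define pr where "pr k = proj A r k \<theta>" for k
    have prP: "pr k \<in> Net A r k" "l1 A \<theta> (pr k) \<le> \<delta> k" for k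
      unfolding pr_def \<delta>_def using proj_props[OF fin ne r th] by auto
    have devdiff: "\<bar>Dev a - Dev b\<bar> \<le> 2 * \<beta> * l1 A a b" for a b
    proof -
      have "\<bar>(\<Sum>i<n. Lt a i \<omega>) - (\<Sum>i<n. Lt b i \<omega>)\<bar> \<le> (\<Sum>i<n. \<beta> * l1 A a b)"
        unfolding sum_subtractf[symmetric] using lip by (intro order_trans[OF sum_abs] sum_mono) auto
      then have "\<bar>(\<Sum>i<n. Lt a i \<omega>) - (\<Sum>i<n. Lt b i \<omega>)\<bar> / n \<le> \<beta> * l1 A a b"
        using n by (simp add: field_simps)
      moreover have "\<bar>(\<Sum>i<n. Lt a i \<omega>) / n - (\<Sum>i<n. Lt b i \<omega>) / n\<bar> = \<bar>(\<Sum>i<n. Lt a i \<omega>) - (\<Sum>i<n. Lt b i \<omega>)\<bar> / n"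
        by (simp add: diff_divide_distrib[symmetric])
      moreover have "\<bar>Rp a - Rp b\<bar> \<le> \<beta> * l1 A a b" by (rule lipR)
      ultimately show ?thesis unfolding Dev_def by (auto simp: abs_if split: if_splits)
    qed
    have step: "\<bar>Dev (pr (Suc k)) - Dev (pr k)\<bar> < t (Suc k)" if k: "k < K" for k
    proof -
      let ?a = "pr (Suc k)" and ?b = "pr k"
      have "l1 A ?a ?b \<le> l1 A ?a \<theta> + l1 A \<theta> ?b" by (rule l1_tri)
      also have "\<dots> \<le> \<delta> (Suc k) + \<delta> k" using prP[of "Suc k"] prP[of k] l1_sym[of A ?a \<theta>] by simp
      also have "\<dots> = 3 * \<delta> (Suc k)" unfolding \<delta>_def by (simp add: field_simps)
      finally have "(?a, ?b) \<in> Pk (Suc k)" unfolding Pk_def using prP by auto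
      then have "\<omega> \<notin> Bad (Suc k) ?a ?b" using nBad k by auto
      then have lt: "\<bar>(\<Sum>i\<in>{..<n}. Z ?a ?b i \<omega>) - (\<Sum>i\<in>{..<n}. expectation (Z ?a ?b i))\<bar> < real n * t (Suc k)"
        unfolding Bad_def using \<omega> by auto
      have e1: "(\<Sum>i\<in>{..<n}. expectation (Z ?a ?b i)) = real n * (Rp ?a - Rp ?b)" using EZ by simp
      have e2: "(\<Sum>i\<in>{..<n}. Z ?a ?b i \<omega>) = (\<Sum>i<n. Lt ?a i \<omega>) - (\<Sum>i<n. Lt ?b i \<omega>)"
        unfolding Z_def by (simp add: sum_subtractf)
      have "real n * (Dev ?a - Dev ?b) = (\<Sum>i\<in>{..<n}. Z ?a ?b i \<omega>) - (\<Sum>i\<in>{..<n}. expectation (Z ?a ?b i))"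
        unfolding e1 e2 Dev_def using n by (simp add: field_simps)
      then have "\<bar>real n * (Dev ?a - Dev ?b)\<bar> < real n * t (Suc k)" using lt by simp
      then have "real n * \<bar>Dev ?a - Dev ?b\<bar> < real n * t (Suc k)" by (simp add: abs_mult)
      moreover have "real n > 0" using n by simp
      ultimately show ?thesis by (simp add: mult_less_cancel_left_pos)
    qed
    have dev0: "Dev (pr 0) = 0"
    proof -
      have "pr 0 = (\<lambda>_. 0)" unfolding pr_def proj_def by simp
      moreover have "(\<Sum>i<n. Lt (\<lambda>_. 0) i \<omega>) = real n * Rp (\<lambda>_. 0)" using zero \<omega> by simp
      ultimately show ?thesis unfolding Dev_def using n by simp
    qed
    have "Dev (pr K) = (\<Sum>k<K. Dev (pr (Suc k)) - Dev (pr k))"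
      using sum_lessThan_telescope[of "\<lambda>k. Dev (pr k)" K] dev0 by simp
    then have "\<bar>Dev (pr K)\<bar> \<le> (\<Sum>k<K. \<bar>Dev (pr (Suc k)) - Dev (pr k)\<bar>)" by (simp add: sum_abs)
    also have "\<dots> < (\<Sum>k<K. t (Suc k))" using K1 step by (intro sum_strict_mono) (auto simp: lessThan_empty_iff)
    also have "(\<Sum>k<K. t (Suc k)) = \<epsilon> / 6 * (\<Sum>k<K. (3/4) ^ Suc k)" unfolding t_def
      by (simp add: sum_distrib_left)
    also have "\<dots> \<le> \<epsilon> / 6 * 3" using \<epsilon> t_sum[of K] by (intro mult_left_mono) auto
    finally have d1: "\<bar>Dev (pr K)\<bar> < \<epsilon> / 2" by simp
    have "\<bar>Dev \<theta> - Dev (pr K)\<bar> \<le> 2 * \<beta> * l1 A \<theta> (pr K)" by (rule devdiff)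
    also have "\<dots> \<le> 2 * \<beta> * \<delta> K" using prP(2)[of K] \<beta> by simp
    finally have d2: "\<bar>Dev \<theta> - Dev (pr K)\<bar> \<le> \<epsilon> / 2" using K by simp
    have "\<bar>Dev \<theta>\<bar> < \<epsilon>" using d1 d2 by (auto simp: abs_if split: if_splits)
    then show False using big_dev unfolding Dev_def by simp
  qed
  show ?thesis using U_sets Ubound incl by blast
qed

definition phi :: "real \<Rightarrow> (real \<Rightarrow> real^'m::finite) \<times> (real^'q::finite) \<times> bool \<Rightarrow> 'm option list + 'q \<Rightarrow> real" where
  "phi T w j = (case j of Inl I \<Rightarrow> G (rev I) (fst w) T | Inr k \<Rightarrow> fst (snd w) $ k)"

definition lt :: "real \<Rightarrow> nat \<Rightarrow> ('m::finite option list + 'q::finite \<Rightarrow> real) \<Rightarrow> (real \<Rightarrow> real^'m) \<times> (real^'q) \<times> bool \<Rightarrow> real" where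
  "lt T p \<theta> w = loss (snd (snd w)) (\<Sum>j\<in>idx p. \<theta> j * phi T w j)"

lemma phi_meas: "(\<lambda>w. phi T w j) \<in> borel_measurable (triple_space :: ((real \<Rightarrow> real^'m::finite) \<times> (real^'q::finite) \<times> bool) measure)"
proof (cases j)
  case (Inl I)
  have "(\<lambda>w::(real \<Rightarrow> real^'m) \<times> (real^'q) \<times> bool. G (rev I) (fst w) T) \<in> borel_measurable triple_space"
    unfolding triple_space_def by (rule measurable_compose[OF measurable_fst G_meas])
  then show ?thesis unfolding phi_def Inl by simp
next
  case (Inr k)
  have c: "(\<lambda>v::real^'q. v $ k) \<in> borel_measurable borel"
    by (intro borel_measurable_continuous_onI continuous_on_component continuous_on_id)
  have "(\<lambda>w::(real \<Rightarrow> real^'m) \<times> (real^'q) \<times> bool. fst (snd w)) \<in> measurable triple_space borel"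
    unfolding triple_space_def by (rule measurable_compose[OF measurable_snd measurable_fst])
  then have "(\<lambda>w::(real \<Rightarrow> real^'m) \<times> (real^'q) \<times> bool. fst (snd w) $ k) \<in> borel_measurable triple_space"
    using measurable_compose[OF _ c] by blast
  then show ?thesis unfolding phi_def Inr by simp
qed

lemma lt_meas: "lt T p \<theta> \<in> borel_measurable (triple_space :: ((real \<Rightarrow> real^'m::finite) \<times> (real^'q::finite) \<times> bool) measure)"
proof -
  have y: "(\<lambda>w::(real \<Rightarrow> real^'m) \<times> (real^'q) \<times> bool. snd (snd w)) \<in> measurable triple_space (count_space UNIV)"
    unfolding triple_space_def by (rule measurable_compose[OF measurable_snd measurable_snd])
  have yb: "(\<lambda>w::(real \<Rightarrow> real^'m) \<times> (real^'q) \<times> bool. of_bool (snd (snd w)) :: real) \<in> borel_measurable triple_space"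
    by (rule measurable_compose[OF y]) simp
  have e: "(\<lambda>w::(real \<Rightarrow> real^'m) \<times> (real^'q) \<times> bool. \<Sum>j\<in>idx p. \<theta> j * phi T w j) \<in> borel_measurable triple_space"
    by (intro borel_measurable_sum borel_measurable_times borel_measurable_const phi_meas)
  show ?thesis unfolding lt_def loss_def using yb e by measurable
qed

lemma loss_lip: "\<bar>loss y u - loss y v\<bar> \<le> \<bar>u - v\<bar>"
proof -
  have key: "ln (1 + exp a) - ln (1 + exp b) \<le> a - b \<and> 0 \<le> ln (1 + exp a) - ln (1 + exp b)" if "b \<le> a" for a b :: real
  proof
    have "1 + exp a \<le> exp (a - b) * (1 + exp b)"
    proof -
      have "exp (a - b) * (1 + exp b) = exp (a - b) + exp a" by (simp add: distrib_left exp_diff)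
      moreover have "1 \<le> exp (a - b)" using that by simp
      ultimately show ?thesis by simp
    qed
    then have "ln (1 + exp a) \<le> ln (exp (a - b) * (1 + exp b))" by (intro ln_mono) (auto intro: add_pos_pos)
    also have "\<dots> = (a - b) + ln (1 + exp b)"
    proof -
      have "0 < 1 + exp b" by (simp add: add_pos_pos)
      then show ?thesis using ln_mult[of "exp (a - b)" "1 + exp b"] by simp
    qed
    finally show "ln (1 + exp a) - ln (1 + exp b) \<le> a - b" by simp
    show "0 \<le> ln (1 + exp a) - ln (1 + exp b)" using that by (simp add: add_pos_pos)
  qed
  show ?thesis
  proof (cases "v \<le> u")
    case True
    from key[OF True] show ?thesis unfolding loss_def by (cases y) (auto simp: abs_if split: if_splits)
  next
    case False
    then have "u \<le> v" by simp
    from key[OF this] show ?thesis unfolding loss_def by (cases y) (auto simp: abs_if split: if_splits)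
  qed
qed

lemma loss_nonneg: "loss y u \<ge> 0"
proof -
  have a: "ln (1 + exp u) \<ge> 0" by (simp add: add_pos_pos)
  have b: "ln (1 + exp u) \<ge> u"
  proof -
    have "exp u \<le> 1 + exp u" by simp
    then have "ln (exp u) \<le> ln (1 + exp u)" by (intro ln_mono) auto
    then show ?thesis by simp
  qed
  show ?thesis unfolding loss_def using a b by (cases y) auto
qed

lemma loss_zero: "loss y 0 = ln 2" unfolding loss_def by simp

lemma lt_lip:
  fixes w :: "(real \<Rightarrow> real^'m::finite) \<times> (real^'q::finite) \<times> bool"
  assumes "\<forall>j\<in>idx p. \<bar>phi T w j\<bar> \<le> \<beta>"
  shows "\<bar>lt T p a w - lt T p b w\<bar> \<le> \<beta> * l1 (idx p) a b"
proof -
  have "\<bar>lt T p a w - lt T p b w\<bar> \<le> \<bar>(\<Sum>j\<in>idx p. a j * phi T w j) - (\<Sum>j\<in>idx p. b j * phi T w j)\<bar>"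
    unfolding lt_def by (rule loss_lip)
  also have "\<dots> = \<bar>\<Sum>j\<in>idx p. (a j - b j) * phi T w j\<bar>" by (simp add: sum_subtractf left_diff_distrib)
  also have "\<dots> \<le> (\<Sum>j\<in>idx p. \<bar>(a j - b j) * phi T w j\<bar>)" by (rule sum_abs)
  also have "\<dots> \<le> (\<Sum>j\<in>idx p. \<beta> * \<bar>a j - b j\<bar>)"
  proof (intro sum_mono)
    fix j :: "'m option list + 'q" assume "j \<in> idx p"
    then have "\<bar>phi T w j\<bar> \<le> \<beta>" using assms by blast
    then show "\<bar>(a j - b j) * phi T w j\<bar> \<le> \<beta> * \<bar>a j - b j\<bar>"
      by (simp add: abs_mult mult.commute mult_right_mono)
  qed
  also have "\<dots> = \<beta> * l1 (idx p) a b" unfolding l1_def by (simp add: sum_distrib_left)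
  finally show ?thesis .
qed

lemma lt_zero: "lt T p (\<lambda>_. 0) w = ln 2" unfolding lt_def by (simp add: loss_zero)

lemma inf_close:
  fixes f g :: "'a \<Rightarrow> real"
  assumes S: "S \<noteq> {}" and f0: "\<And>x. x \<in> S \<Longrightarrow> f x \<ge> 0" and g0: "\<And>x. x \<in> S \<Longrightarrow> g x \<ge> 0"
    and close: "\<And>x. x \<in> S \<Longrightarrow> \<bar>f x - g x\<bar> \<le> e"
  shows "\<bar>Inf (f ` S) - Inf (g ` S)\<bar> \<le> e"
proof -
  have bf: "bdd_below (f ` S)" using f0 by (intro bdd_belowI2[of _ 0]) auto
  have bg: "bdd_below (g ` S)" using g0 by (intro bdd_belowI2[of _ 0]) auto
  have "Inf (f ` S) - e \<le> Inf (g ` S)"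
  proof -
    have "Inf (f ` S) - e \<le> g x" if "x \<in> S" for x
      using cINF_lower[OF bf that] close[OF that] by (auto simp: abs_if split: if_splits)
    then have "Inf (f ` S) - e \<le> Inf (g ` S)" using S by (intro cINF_greatest) auto
    then show ?thesis .
  qed
  moreover have "Inf (g ` S) - e \<le> Inf (f ` S)"
  proof -
    have "Inf (g ` S) - e \<le> f x" if "x \<in> S" for x
      using cINF_lower[OF bg that] close[OF that] by (auto simp: abs_if split: if_splits)
    then show ?thesis using S by (intro cINF_greatest) auto
  qed
  ultimately show ?thesis by (auto simp: abs_if split: if_splits)
qed

lemma card_idx:
  shows "finite (idx p :: ('m::finite option list + 'q::finite) set)"
    and "card (idx p :: ('m option list + 'q) set) = sd (CARD('m) + 1) p + CARD('q)"
    and "(idx p :: ('m option list + 'q) set) \<noteq> {}"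
proof -
  have finL: "finite {I :: 'm option list. length I \<le> p}"
    using finite_lists_length_le[of "UNIV :: 'm option set" p] by simp
  have cL: "card {I :: 'm option list. length I \<le> p} = sd (CARD('m) + 1) p"
  proof -
    have "card {I :: 'm option list. length I \<le> p} = (\<Sum>i\<le>p. card (UNIV :: 'm option set) ^ i)"
      using card_lists_length_le[of "UNIV :: 'm option set" p] by simp
    moreover have "card (UNIV :: 'm option set) = CARD('m) + 1"
      using card_UNIV_option[where 'a='m] by simp
    ultimately show ?thesis unfolding sd_def by simp
  qed
  show "finite (idx p :: ('m option list + 'q) set)" unfolding idx_def using finL by simp
  have "card (idx p :: ('m option list + 'q) set) = card (Inl ` {I :: 'm option list. length I \<le> p} :: ('m option list + 'q) set) + card (Inr ` (UNIV :: 'q set) :: ('m option list + 'q) set)"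
    unfolding idx_def by (subst card_Un_disjoint) (use finL in auto)
  also have "\<dots> = sd (CARD('m) + 1) p + CARD('q)" using cL by (simp add: card_image)
  finally show "card (idx p :: ('m option list + 'q) set) = sd (CARD('m) + 1) p + CARD('q)" .
  show "(idx p :: ('m option list + 'q) set) \<noteq> {}" unfolding idx_def by simp
qed

theorem proposition3:
  fixes M :: "'w measure" and T r CX Cz \<epsilon> :: real and p n :: nat
    and x0 :: "real^'m::finite"
    and X :: "'w \<Rightarrow> real \<Rightarrow> real^'m" and Z :: "'w \<Rightarrow> real^'q::finite" and Y :: "'w \<Rightarrow> bool"
    and Xs :: "nat \<Rightarrow> 'w \<Rightarrow> real \<Rightarrow> real^'m" and Zs :: "nat \<Rightarrow> 'w \<Rightarrow> real^'q" and Ys :: "nat \<Rightarrow> 'w \<Rightarrow> bool"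
  assumes "prob_space M" and "T > 0" and "r > 0" and "\<epsilon> > 0"
    and paths: "\<forall>\<omega>\<in>space M. continuous_on {0..T} (X \<omega>) \<and> X \<omega> 0 = x0 \<and> tv 0 T (X \<omega>) < \<infinity>"
    and paths_i: "\<forall>i. \<forall>\<omega>\<in>space M. continuous_on {0..T} (Xs i \<omega>) \<and> Xs i \<omega> 0 = x0 \<and> tv 0 T (Xs i \<omega>) < \<infinity>"
    and meas: "(\<lambda>\<omega>. (X \<omega>, Z \<omega>, Y \<omega>)) \<in> measurable M triple_space"
    and meas_i: "\<forall>i. (\<lambda>\<omega>. (Xs i \<omega>, Zs i \<omega>, Ys i \<omega>)) \<in> measurable M triple_space"
    and sig_meas: "\<forall>I. (\<lambda>\<omega>. sig T (X \<omega>) I) \<in> borel_measurable M"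
    and sig_meas_i: "\<forall>i I. (\<lambda>\<omega>. sig T (Xs i \<omega>) I) \<in> borel_measurable M"
    and indep: "prob_space.indep_vars M (\<lambda>_. triple_space) (\<lambda>i \<omega>. (Xs i \<omega>, Zs i \<omega>, Ys i \<omega>)) UNIV"
    and ident: "\<forall>i. distr M triple_space (\<lambda>\<omega>. (Xs i \<omega>, Zs i \<omega>, Ys i \<omega>))
                   = distr M triple_space (\<lambda>\<omega>. (X \<omega>, Z \<omega>, Y \<omega>))"
    and bounds: "AE \<omega> in M. tv 0 T (X \<omega>) < ereal CX \<and> norm (Z \<omega>) < Cz"
    and n_ge: "n \<ge> (LEAST m::nat. real m \<ge>
                 432\<^sup>2 * (2 * (Cz + exp (CX + T)))\<^sup>2 * pi * r\<^sup>2
                   * real (sd (CARD('m) + 1) p + CARD('q)) / \<epsilon>\<^sup>2)"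
  shows "measure M {\<omega> \<in> space M.
            \<bar>Lhat n T r p Xs Zs Ys \<omega> - Lpop M T r p X Z Y\<bar> > \<epsilon>}
         \<le> 74 * exp (- (1 / (8 * r * (288 * (2 * (Cz + exp (CX + T)))\<^sup>2 * r + 2 * (Cz + exp (CX + T)))))
                       * real n * \<epsilon>\<^sup>2)"
proof -
  interpret prob_space M by fact
  let ?tr = "\<lambda>\<omega>. (X \<omega>, Z \<omega>, Y \<omega>)"
  let ?tri = "\<lambda>i \<omega>. (Xs i \<omega>, Zs i \<omega>, Ys i \<omega>)"
  define \<beta> where "\<beta> = Cz + exp (CX + T)"
  define A where "A = (idx p :: ('m option list + 'q) set)"
  have finA: "finite A" and neA: "A \<noteq> {}" and cardA: "card A = sd (CARD('m) + 1) p + CARD('q)"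
    unfolding A_def using card_idx by auto
  have T0: "0 \<le> T" using \<open>T > 0\<close> by simp
  have Cz: "Cz > 0"
  proof (rule ccontr)
    assume c: "\<not> Cz > 0"
    have "AE \<omega> in M. norm (Z \<omega>) < Cz" using bounds by (auto elim: eventually_mono)
    then have "AE \<omega> in M. False" by (rule eventually_mono) (use c in \<open>smt (verit) norm_ge_zero\<close>)
    then show False using AE_False emeasure_space_1 by simp
  qed
  have \<beta>: "\<beta> > 0" unfolding \<beta>_def using Cz by (simp add: add_pos_pos)
  have sigG: "sig T (X \<omega>) I = G (rev I) (X \<omega>) T" if "\<omega> \<in> space M" for \<omega> I
    using paths that sig_G(1)[OF _ _ T0] by blast
  have sigGi: "sig T (Xs i \<omega>) I = G (rev I) (Xs i \<omega>) T" if "\<omega> \<in> space M" for \<omega> I i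
    using paths_i that sig_G(1)[OF _ _ T0] by blast
  have featX: "loss (Y \<omega>) (feat T p (X \<omega>) (Z \<omega>) \<theta>) = lt T p \<theta> (?tr \<omega>)" if "\<omega> \<in> space M" for \<omega> \<theta>
  proof -
    have "(case j of Inl x \<Rightarrow> sig T (X \<omega>) x | Inr x \<Rightarrow> Z \<omega> $ x) = phi T (?tr \<omega>) j" for j
      unfolding phi_def by (cases j) (simp_all add: sigG[OF that])
    then show ?thesis unfolding lt_def feat_def by simp
  qed
  have featXi: "loss (Ys i \<omega>) (feat T p (Xs i \<omega>) (Zs i \<omega>) \<theta>) = lt T p \<theta> (?tri i \<omega>)" if "\<omega> \<in> space M" for \<omega> \<theta> i
  proof -
    have "(case j of Inl x \<Rightarrow> sig T (Xs i \<omega>) x | Inr x \<Rightarrow> Zs i \<omega> $ x) = phi T (?tri i \<omega>) j" for j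
      unfolding phi_def by (cases j) (simp_all add: sigGi[OF that])
    then show ?thesis unfolding lt_def feat_def by simp
  qed
  have tr_meas: "?tr \<in> measurable M triple_space" by (rule meas)
  have tri_meas: "?tri i \<in> measurable M triple_space" for i using meas_i by blast
  have phim: "(\<lambda>w. phi T w j) \<in> borel_measurable triple_space" for j by (rule phi_meas)
  define Gd where "Gd = {w \<in> space triple_space. \<forall>j\<in>A. \<bar>phi T w j\<bar> \<le> \<beta>}"
  have Gd_sets: "Gd \<in> sets triple_space"
    unfolding Gd_def
  proof (rule sets.sets_Collect_finite_All)
    show "finite A" by (rule finA)
    fix j
    have "(\<lambda>w. \<bar>phi T w j\<bar>) \<in> borel_measurable triple_space" using phim[of j] by measurable
    then show "{w \<in> space triple_space. \<bar>phi T w j\<bar> \<le> \<beta>} \<in> sets triple_space" by measurable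
  qed
  have Gd_pred: "{w \<in> space triple_space. w \<in> Gd} \<in> sets triple_space"
    using Gd_sets by (simp add: Gd_def Collect_conj_eq)
  have AEtr: "AE \<omega> in M. ?tr \<omega> \<in> Gd"
  proof (rule AE_mp[OF bounds], intro AE_I2 impI)
    fix \<omega> assume \<omega>: "\<omega> \<in> space M" and b: "tv 0 T (X \<omega>) < ereal CX \<and> norm (Z \<omega>) < Cz"
    have sp: "?tr \<omega> \<in> space triple_space" using measurable_space[OF tr_meas \<omega>] .
    have "\<bar>phi T (?tr \<omega>) j\<bar> \<le> \<beta>" for j
    proof (cases j)
      case (Inl I)
      have "\<bar>sig T (X \<omega>) I\<bar> \<le> exp (CX + T)"
        using sig_bound[of T "X \<omega>" CX I] paths \<omega> b T0 by blast
      then show ?thesis unfolding phi_def Inl using sigG[OF \<omega>, of I] Cz \<beta>_def by simp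
    next
      case (Inr k)
      have "\<bar>Z \<omega> $ k\<bar> \<le> norm (Z \<omega>)" by (rule component_le_norm_cart)
      moreover have "exp (CX + T) > 0" by simp
      ultimately have "\<bar>Z \<omega> $ k\<bar> \<le> Cz + exp (CX + T)" using b by linarith
      then show ?thesis unfolding phi_def Inr \<beta>_def by simp
    qed
    then show "?tr \<omega> \<in> Gd" unfolding Gd_def using sp by simp
  qed
  have AEtri: "AE \<omega> in M. ?tri i \<omega> \<in> Gd" for i
  proof -
    have "AE w in distr M triple_space ?tr. w \<in> Gd"
      using AEtr by (subst AE_distr_iff[OF tr_meas Gd_pred])
    then have "AE w in distr M triple_space (?tri i). w \<in> Gd" using ident by metis
    then show ?thesis by (subst (asm) AE_distr_iff[OF tri_meas Gd_pred])
  qed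
  have AEall: "AE \<omega> in M. \<forall>i. ?tri i \<omega> \<in> Gd" using AEtri by (simp add: AE_all_countable)
  have lip: "\<bar>lt T p a w - lt T p b w\<bar> \<le> \<beta> * l1 A a b" if "w \<in> Gd" for a b w
    using that unfolding Gd_def A_def by (intro lt_lip) auto
  define Lt where "Lt a i \<omega> = lt T p a (?tri i \<omega>)" for a i \<omega>
  define Rp where "Rp a = (\<integral>\<omega>. lt T p a (?tr \<omega>) \<partial>M)" for a
  have Ltm: "Lt a i \<in> borel_measurable M" for a i
    unfolding Lt_def by (rule measurable_compose[OF tri_meas lt_meas])
  have trm: "(\<lambda>\<omega>. lt T p a (?tr \<omega>)) \<in> borel_measurable M" for a
    by (rule measurable_compose[OF tr_meas lt_meas])
  have ltb: "\<bar>lt T p a w\<bar> \<le> ln 2 + \<beta> * l1 A a (\<lambda>_. 0)" if "w \<in> Gd" for a w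
  proof -
    have "\<bar>lt T p a w - ln 2\<bar> \<le> \<beta> * l1 A a (\<lambda>_. 0)" using lip[OF that, of a "\<lambda>_. 0"] by (simp add: lt_zero)
    moreover have "lt T p a w \<ge> 0" unfolding lt_def by (rule loss_nonneg)
    ultimately show ?thesis unfolding abs_le_iff by linarith
  qed
  have integ: "integrable M (Lt a i)" for a i
  proof (rule integrable_const_bound)
    show "AE x in M. norm (Lt a i x) \<le> ln 2 + \<beta> * l1 A a (\<lambda>_. 0)"
      using AEtri[of i] by (rule eventually_mono) (use ltb in \<open>auto simp: Lt_def\<close>)
  qed (rule Ltm)
  have integ_tr: "integrable M (\<lambda>\<omega>. lt T p a (?tr \<omega>))" for a
  proof (rule integrable_const_bound)
    show "AE x in M. norm (lt T p a (?tr x)) \<le> ln 2 + \<beta> * l1 A a (\<lambda>_. 0)"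
      using AEtr by (rule eventually_mono) (use ltb in auto)
  qed (rule trm)
  have expect: "integral\<^sup>L M (Lt a i) = Rp a" for a i
  proof -
    have "integral\<^sup>L M (Lt a i) = integral\<^sup>L (distr M triple_space (?tri i)) (lt T p a)"
      unfolding Lt_def by (rule integral_distr[OF tri_meas lt_meas, symmetric])
    also have "\<dots> = integral\<^sup>L (distr M triple_space ?tr) (lt T p a)" using ident by metis
    also have "\<dots> = Rp a" unfolding Rp_def by (rule integral_distr[OF tr_meas lt_meas])
    finally show ?thesis .
  qed
  have indep': "indep_vars (\<lambda>_. borel) (\<lambda>i \<omega>. Lt a i \<omega> - Lt b i \<omega>) {..<n}" for a b
  proof -
    have "indep_vars (\<lambda>_. borel) (\<lambda>i \<omega>. (\<lambda>w. lt T p a w - lt T p b w) (?tri i \<omega>)) UNIV"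
      by (rule indep_vars_compose2[OF indep]) (use lt_meas in measurable)
    then show ?thesis unfolding Lt_def by (rule indep_vars_subset) auto
  qed
  have lipAE: "AE \<omega> in M. \<forall>i<n. \<forall>a b. \<bar>Lt a i \<omega> - Lt b i \<omega>\<bar> \<le> \<beta> * l1 A a b"
    using AEall by (rule eventually_mono) (use lip in \<open>auto simp: Lt_def\<close>)
  have lipR: "\<bar>Rp a - Rp b\<bar> \<le> \<beta> * l1 A a b" for a b
  proof -
    have d: "Rp a - Rp b = (\<integral>\<omega>. lt T p a (?tr \<omega>) - lt T p b (?tr \<omega>) \<partial>M)"
      unfolding Rp_def using integ_tr by (simp add: Bochner_Integration.integral_diff)
    have AEd: "AE \<omega> in M. \<bar>lt T p a (?tr \<omega>) - lt T p b (?tr \<omega>)\<bar> \<le> \<beta> * l1 A a b"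
      using AEtr by (rule eventually_mono) (use lip in auto)
    have c: "(\<integral>\<omega>. \<beta> * l1 A a b \<partial>M) = \<beta> * l1 A a b" using prob_space by simp
    have "(\<integral>\<omega>. lt T p a (?tr \<omega>) - lt T p b (?tr \<omega>) \<partial>M) \<le> (\<integral>\<omega>. \<beta> * l1 A a b \<partial>M)"
      using AEd integ_tr by (intro integral_mono_AE) (auto elim: eventually_mono)
    moreover have "- (\<integral>\<omega>. lt T p a (?tr \<omega>) - lt T p b (?tr \<omega>) \<partial>M) \<le> (\<integral>\<omega>. \<beta> * l1 A a b \<partial>M)"
    proof -
      have "(\<integral>\<omega>. - (lt T p a (?tr \<omega>) - lt T p b (?tr \<omega>)) \<partial>M) \<le> (\<integral>\<omega>. \<beta> * l1 A a b \<partial>M)"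
        using AEd integ_tr by (intro integral_mono_AE) (auto elim: eventually_mono)
      moreover have "(\<integral>\<omega>. - (lt T p a (?tr \<omega>) - lt T p b (?tr \<omega>)) \<partial>M) = - (\<integral>\<omega>. lt T p a (?tr \<omega>) - lt T p b (?tr \<omega>) \<partial>M)"
        by (rule Bochner_Integration.integral_minus)
      ultimately show ?thesis by linarith
    qed
    ultimately show ?thesis unfolding d c by (auto simp: abs_if split: if_splits)
  qed
  have zero: "Lt (\<lambda>_. 0) i \<omega> = Rp (\<lambda>_. 0)" for i \<omega>
    unfolding Lt_def Rp_def lt_zero using prob_space by simp
  define K0 where "K0 = 432\<^sup>2 * (2 * (Cz + exp (CX + T)))\<^sup>2 * pi * r\<^sup>2
                   * real (sd (CARD('m) + 1) p + CARD('q)) / \<epsilon>\<^sup>2"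
  have nK: "real n \<ge> K0"
  proof -
    obtain m0 :: nat where m0: "K0 \<le> real m0" using real_arch_simple by blast
    have "K0 \<le> real (LEAST m::nat. K0 \<le> real m)" by (rule LeastI[of "\<lambda>m. K0 \<le> real m" m0]) (rule m0)
    moreover have "(LEAST m::nat. K0 \<le> real m) \<le> n" using n_ge unfolding K0_def by simp
    ultimately show ?thesis by (meson of_nat_le_iff order_trans)
  qed
  have Dpos: "real (card A) \<ge> 1" using finA neA by (simp add: Suc_le_eq card_gt_0_iff)
  have K0eq: "K0 * \<epsilon>\<^sup>2 = (432\<^sup>2 * 4 * pi) * (\<beta>\<^sup>2 * r\<^sup>2 * real (card A))"
    unfolding K0_def \<beta>_def[symmetric] cardA using \<open>\<epsilon> > 0\<close> by (simp add: field_simps power2_eq_square)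
  have X0: "\<beta>\<^sup>2 * r\<^sup>2 * real (card A) > 0" using \<beta> \<open>r > 0\<close> Dpos by simp
  have K0pos: "K0 > 0"
  proof -
    have "K0 * \<epsilon>\<^sup>2 > 0" unfolding K0eq using X0 pi_gt_zero by simp
    then show ?thesis using \<open>\<epsilon> > 0\<close> by (simp add: zero_less_mult_iff)
  qed
  have n0: "n > 0" using nK K0pos by simp
  have big: "real n * \<epsilon>\<^sup>2 \<ge> 20000 * real (card A) * \<beta>\<^sup>2 * r\<^sup>2"
  proof -
    have "K0 * \<epsilon>\<^sup>2 \<le> real n * \<epsilon>\<^sup>2" using nK by (intro mult_right_mono) auto
    moreover have "20000 * (\<beta>\<^sup>2 * r\<^sup>2 * real (card A)) \<le> (432\<^sup>2 * 4 * pi) * (\<beta>\<^sup>2 * r\<^sup>2 * real (card A))"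
      using X0 pi_gt3 by (intro mult_right_mono) auto
    ultimately show ?thesis unfolding K0eq by (simp add: algebra_simps)
  qed
  have "\<exists>U\<in>sets M. {\<omega>\<in>space M. \<exists>\<theta>. (\<Sum>j\<in>A. \<bar>\<theta> j\<bar>) \<le> r \<and> \<bar>(\<Sum>i<n. Lt \<theta> i \<omega>) / n - Rp \<theta>\<bar> > \<epsilon>} \<subseteq> U
           \<and> measure M U \<le> 2 * exp (- (real n * \<epsilon>\<^sup>2 / (9216 * \<beta>\<^sup>2 * r\<^sup>2)))"
    by (rule chaining[OF assms(1) finA neA n0 \<open>r > 0\<close> \<beta> \<open>\<epsilon> > 0\<close> big Ltm indep' integ expect lipAE lipR])
       (rule zero)
  then obtain U where U: "U \<in> sets M"
    "{\<omega>\<in>space M. \<exists>\<theta>. (\<Sum>j\<in>A. \<bar>\<theta> j\<bar>) \<le> r \<and> \<bar>(\<Sum>i<n. Lt \<theta> i \<omega>) / n - Rp \<theta>\<bar> > \<epsilon>} \<subseteq> U"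
    "measure M U \<le> 2 * exp (- (real n * \<epsilon>\<^sup>2 / (9216 * \<beta>\<^sup>2 * r\<^sup>2)))" by blast
  have Lhat_eq: "Lhat n T r p Xs Zs Ys \<omega> = Inf ((\<lambda>\<theta>. (\<Sum>i<n. Lt \<theta> i \<omega>) / n) ` l1ball p r)"
    if "\<omega> \<in> space M" for \<omega>
    unfolding Lhat_def emp_risk_def Lt_def using featXi[OF that] by simp
  have Lpop_eq: "Lpop M T r p X Z Y = Inf (Rp ` l1ball p r)"
    unfolding Lpop_def risk_def Rp_def
    by (intro arg_cong[where f = Inf] image_cong refl Bochner_Integration.integral_cong) (simp add: featX)
  have ball: "l1ball p r = {\<theta>. (\<Sum>j\<in>A. \<bar>\<theta> j\<bar>) \<le> r}" unfolding l1ball_def A_def by simp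
  have sub: "{\<omega> \<in> space M. \<bar>Lhat n T r p Xs Zs Ys \<omega> - Lpop M T r p X Z Y\<bar> > \<epsilon>} \<subseteq> U"
  proof
    fix \<omega> assume "\<omega> \<in> {\<omega> \<in> space M. \<bar>Lhat n T r p Xs Zs Ys \<omega> - Lpop M T r p X Z Y\<bar> > \<epsilon>}"
    then have \<omega>: "\<omega> \<in> space M" and gt: "\<bar>Lhat n T r p Xs Zs Ys \<omega> - Lpop M T r p X Z Y\<bar> > \<epsilon>" by auto
    have "\<exists>\<theta>. (\<Sum>j\<in>A. \<bar>\<theta> j\<bar>) \<le> r \<and> \<bar>(\<Sum>i<n. Lt \<theta> i \<omega>) / n - Rp \<theta>\<bar> > \<epsilon>"
    proof (rule ccontr)
      assume "\<not> ?thesis"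
      then have cl: "\<And>\<theta>. \<theta> \<in> l1ball p r \<Longrightarrow> \<bar>(\<Sum>i<n. Lt \<theta> i \<omega>) / n - Rp \<theta>\<bar> \<le> \<epsilon>"
        unfolding ball by (auto simp: not_less)
      have "\<bar>Inf ((\<lambda>\<theta>. (\<Sum>i<n. Lt \<theta> i \<omega>) / n) ` l1ball p r) - Inf (Rp ` l1ball p r)\<bar> \<le> \<epsilon>"
      proof (rule inf_close)
        have "(\<lambda>_. 0) \<in> l1ball p r" unfolding l1ball_def using \<open>r > 0\<close> by simp
        then show "l1ball p r \<noteq> {}" by blast
        show "(\<Sum>i<n. Lt \<theta> i \<omega>) / real n \<ge> 0" for \<theta>
          unfolding Lt_def lt_def by (intro divide_nonneg_nonneg sum_nonneg loss_nonneg) auto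
        show "Rp \<theta> \<ge> 0" for \<theta>
          unfolding Rp_def lt_def by (intro integral_nonneg_AE AE_I2 loss_nonneg)
      qed (rule cl)
      then show False using gt Lhat_eq[OF \<omega>] Lpop_eq by simp
    qed
    then show "\<omega> \<in> U" using U(2) \<omega> by blast
  qed
  have "measure M {\<omega> \<in> space M. \<bar>Lhat n T r p Xs Zs Ys \<omega> - Lpop M T r p X Z Y\<bar> > \<epsilon>} \<le> measure M U"
    by (rule finite_measure_mono[OF sub U(1)])
  also have "\<dots> \<le> 2 * exp (- (real n * \<epsilon>\<^sup>2 / (9216 * \<beta>\<^sup>2 * r\<^sup>2)))" by (rule U(3))
  also have "\<dots> \<le> 74 * exp (- (1 / (8 * r * (288 * (2 * \<beta>)\<^sup>2 * r + 2 * \<beta>))) * real n * \<epsilon>\<^sup>2)"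
  proof -
    have pos: "9216 * \<beta>\<^sup>2 * r\<^sup>2 > 0" using \<beta> \<open>r > 0\<close> by simp
    have "8 * r * (288 * (2 * \<beta>)\<^sup>2 * r + 2 * \<beta>) = 9216 * \<beta>\<^sup>2 * r\<^sup>2 + 16 * \<beta> * r"
      by (simp add: power2_eq_square algebra_simps)
    moreover have "16 * \<beta> * r > 0" using \<beta> \<open>r > 0\<close> by simp
    ultimately have le: "9216 * \<beta>\<^sup>2 * r\<^sup>2 \<le> 8 * r * (288 * (2 * \<beta>)\<^sup>2 * r + 2 * \<beta>)" by simp
    have "1 / (8 * r * (288 * (2 * \<beta>)\<^sup>2 * r + 2 * \<beta>)) \<le> 1 / (9216 * \<beta>\<^sup>2 * r\<^sup>2)"
    proof (rule divide_left_mono[OF le])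
      have p2: "8 * r * (288 * (2 * \<beta>)\<^sup>2 * r + 2 * \<beta>) > 0" using pos le by linarith
      show "0 < 8 * r * (288 * (2 * \<beta>)\<^sup>2 * r + 2 * \<beta>) * (9216 * \<beta>\<^sup>2 * r\<^sup>2)"
        by (rule mult_pos_pos[OF p2 pos])
    qed simp
    then have "1 / (8 * r * (288 * (2 * \<beta>)\<^sup>2 * r + 2 * \<beta>)) * (real n * \<epsilon>\<^sup>2) \<le> 1 / (9216 * \<beta>\<^sup>2 * r\<^sup>2) * (real n * \<epsilon>\<^sup>2)"
      by (intro mult_right_mono) auto
    then have "- (real n * \<epsilon>\<^sup>2 / (9216 * \<beta>\<^sup>2 * r\<^sup>2)) \<le> - (1 / (8 * r * (288 * (2 * \<beta>)\<^sup>2 * r + 2 * \<beta>))) * real n * \<epsilon>\<^sup>2"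
      by (simp add: algebra_simps)
    then have "exp (- (real n * \<epsilon>\<^sup>2 / (9216 * \<beta>\<^sup>2 * r\<^sup>2))) \<le> exp (- (1 / (8 * r * (288 * (2 * \<beta>)\<^sup>2 * r + 2 * \<beta>))) * real n * \<epsilon>\<^sup>2)"
      by simp
    moreover have "0 < exp (- (1 / (8 * r * (288 * (2 * \<beta>)\<^sup>2 * r + 2 * \<beta>))) * real n * \<epsilon>\<^sup>2)" by simp
    ultimately show ?thesis by linarith
  qed
  finally show ?thesis unfolding \<beta>_def .
qed

end
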